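(* Let $Y$ be a complex Banach space and $U:\mathcal B(\mathcal H)\to Y$ a non-null bounded linear operator with $\|U\|<\lambda$. Then for every $n\in\mathbb N$, $1\le p<\infty$ and $1\le q\le\infty$, $$\frac{R_\lambda(\mathbb D,p,U)}{n}\le AP_\lambda(B_{\ell_q^n},p,U)\le\frac{R_\lambda(\mathbb D,p,U)}{n^{\frac1p+\frac1q-1}}.$$
   Context: $\mathcal B(\mathcal H)$: bounded operators on a complex Hilbert space; $\mathbb D$ the open unit disc; $B_{\ell_q^n}$ the open unit ball of $\ell_q^n$. Bounded pluriharmonic $f:\Omega\to\mathcal B(\mathcal H)$ are written $f(z)=\sum_\alpha a_\alpha z^\alpha+\sum_{|\alpha|\ge1}b_\alpha^*\bar z^\alpha$ ($b_0=0$), $\|f\|_\Omega=\sup\|f(z)\|$. $R_\lambda(\Omega,p,U)$: supremum of $r\ge0$ with $\sup_{z\in r\Omega}\sum_\alpha(\|U(a_\alpha)\|^p+\|U(b_\alpha)\|^p)|z^\alpha|^p\le\lambda^p\|f\|_\Omega^p$ for all such $f$. $AP_\lambda(\Omega,p,U)$ ($\Omega\subset\mathbb C^n$): supremum of $\frac1n\sum r_i$ over $r\in\mathbb R^n_{\ge0}$ with $\sum_\alpha(\|U(a_\alpha)\|^p+\|U(b_\alpha)\|^p)r^{p\alpha}\le\lambda^p\|f\|_\Omega^p$ for all such $f$. *)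

theory Defs
  imports "HOL-Analysis.Analysis"
begin

text \<open>A complex Hilbert space H is encoded as a real Hilbert space (type class
  real_inner + complete_space) together with an orthogonal operator J with J o J = -id
  (multiplication by i).  Its complex inner product is recovered from the real one.\<close>

definition cstruct_hilbert :: "('h::real_inner \<Rightarrow> 'h) \<Rightarrow> bool" where
  "cstruct_hilbert J \<longleftrightarrow> linear J \<and> (\<forall>x. J (J x) = - x) \<and> (\<forall>x y. inner (J x) (J y) = inner x y)"

text \<open>A complex Banach space Y: real Banach space with complex structure JY making
  the norm complex-homogeneous.\<close>

definition cscale :: "('y::real_vector \<Rightarrow> 'y) \<Rightarrow> complex \<Rightarrow> 'y \<Rightarrow> 'y" where
  "cscale JY c y = Re c *\<^sub>R y + Im c *\<^sub>R JY y"

definition cstruct_banach :: "('y::real_normed_vector \<Rightarrow> 'y) \<Rightarrow> bool" where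
  "cstruct_banach JY \<longleftrightarrow> linear JY \<and> (\<forall>y. JY (JY y) = - y) \<and>
     (\<forall>c y. norm (cscale JY c y) = cmod c * norm y)"

text \<open>B(H): the complex-linear bounded operators, i.e. bounded real-linear ones commuting with J.\<close>

definition BH :: "('h::real_normed_vector \<Rightarrow> 'h) \<Rightarrow> ('h \<Rightarrow>\<^sub>L 'h) set" where
  "BH J = {T. \<forall>x. blinfun_apply T (J x) = J (blinfun_apply T x)}"

definition cmul :: "('h::real_normed_vector \<Rightarrow> 'h) \<Rightarrow> complex \<Rightarrow> ('h \<Rightarrow>\<^sub>L 'h) \<Rightarrow> ('h \<Rightarrow>\<^sub>L 'h)" where
  "cmul J c T = Re c *\<^sub>R T + Im c *\<^sub>R (Blinfun J o\<^sub>L T)"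

text \<open>Hilbert space adjoint (real adjoint; coincides with the complex adjoint on B(H))\<close>

definition hadj :: "('h::real_inner \<Rightarrow>\<^sub>L 'h) \<Rightarrow> ('h \<Rightarrow>\<^sub>L 'h)" where
  "hadj T = (THE S. \<forall>x y. inner (blinfun_apply T x) y = inner x (blinfun_apply S y))"

definition cbounded_linear_on ::
  "('h::real_normed_vector \<Rightarrow> 'h) \<Rightarrow> ('y::real_normed_vector \<Rightarrow> 'y) \<Rightarrow> (('h \<Rightarrow>\<^sub>L 'h) \<Rightarrow> 'y) \<Rightarrow> bool" where
  "cbounded_linear_on J JY U \<longleftrightarrow>
     (\<forall>S\<in>BH J. \<forall>T\<in>BH J. U (S + T) = U S + U T) \<and>
     (\<forall>c. \<forall>T\<in>BH J. U (cmul J c T) = cscale JY c (U T)) \<and>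
     (\<exists>K. \<forall>T\<in>BH J. norm (U T) \<le> K * norm T)"

definition opnorm :: "('h::real_normed_vector \<Rightarrow> 'h) \<Rightarrow> (('h \<Rightarrow>\<^sub>L 'h) \<Rightarrow> 'y::real_normed_vector) \<Rightarrow> real" where
  "opnorm J U = Sup {norm (U T) | T. T \<in> BH J \<and> norm T \<le> 1}"

definition zpow :: "complex ^ 'n::finite \<Rightarrow> nat ^ 'n \<Rightarrow> complex" where
  "zpow z \<alpha> = (\<Prod>i\<in>UNIV. (z $ i) ^ (\<alpha> $ i))"

definition rpow :: "real ^ 'n::finite \<Rightarrow> nat ^ 'n \<Rightarrow> real" where
  "rpow r \<alpha> = (\<Prod>i\<in>UNIV. (r $ i) ^ (\<alpha> $ i))"

definition phf :: "('h::real_inner \<Rightarrow> 'h) \<Rightarrow> (nat ^ 'n::finite \<Rightarrow> ('h \<Rightarrow>\<^sub>L 'h)) \<Rightarrow> (nat ^ 'n \<Rightarrow> ('h \<Rightarrow>\<^sub>L 'h))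
     \<Rightarrow> complex ^ 'n \<Rightarrow> ('h \<Rightarrow>\<^sub>L 'h)" where
  "phf J a b z = infsum (\<lambda>\<alpha>. cmul J (zpow z \<alpha>) (a \<alpha>)) UNIV
               + infsum (\<lambda>\<alpha>. cmul J (cnj (zpow z \<alpha>)) (hadj (b \<alpha>))) UNIV"

text \<open>(a,b) are the coefficients of a bounded pluriharmonic function on Omega:
  coefficients in B(H), b_0 = 0, both series converge (unconditionally, in operator norm)
  at every point of Omega, and the resulting function is bounded on Omega.\<close>

definition PH :: "('h::{real_inner,complete_space} \<Rightarrow> 'h) \<Rightarrow> (complex ^ 'n::finite) set
     \<Rightarrow> (nat ^ 'n \<Rightarrow> ('h \<Rightarrow>\<^sub>L 'h)) \<Rightarrow> (nat ^ 'n \<Rightarrow> ('h \<Rightarrow>\<^sub>L 'h)) \<Rightarrow> bool" where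
  "PH J \<Omega> a b \<longleftrightarrow>
     (\<forall>\<alpha>. a \<alpha> \<in> BH J \<and> b \<alpha> \<in> BH J) \<and> b 0 = 0 \<and>
     (\<forall>z\<in>\<Omega>. (\<lambda>\<alpha>. cmul J (zpow z \<alpha>) (a \<alpha>)) summable_on UNIV \<and>
             (\<lambda>\<alpha>. cmul J (cnj (zpow z \<alpha>)) (hadj (b \<alpha>))) summable_on UNIV) \<and>
     bounded (phf J a b ` \<Omega>)"

definition supnorm :: "('h::real_inner \<Rightarrow> 'h) \<Rightarrow> (complex ^ 'n::finite) set
     \<Rightarrow> (nat ^ 'n \<Rightarrow> ('h \<Rightarrow>\<^sub>L 'h)) \<Rightarrow> (nat ^ 'n \<Rightarrow> ('h \<Rightarrow>\<^sub>L 'h)) \<Rightarrow> real" where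
  "supnorm J \<Omega> a b = (SUP z\<in>\<Omega>. norm (phf J a b z))"

definition Rlam :: "('h::{real_inner,complete_space} \<Rightarrow> 'h) \<Rightarrow> (('h \<Rightarrow>\<^sub>L 'h) \<Rightarrow> 'y::real_normed_vector)
     \<Rightarrow> real \<Rightarrow> (complex ^ 'n::finite) set \<Rightarrow> real \<Rightarrow> real" where
  "Rlam J U lam \<Omega> p = Sup {r. 0 \<le> r \<and>
     (\<forall>a b. PH J \<Omega> a b \<longrightarrow>
        (SUP z \<in> (\<lambda>w. r *\<^sub>R w) ` \<Omega>.
           infsum (\<lambda>\<alpha>. ennreal ((norm (U (a \<alpha>)) powr p + norm (U (b \<alpha>)) powr p)
                                  * norm (zpow z \<alpha>) powr p)) UNIV)
        \<le> ennreal (lam powr p * supnorm J \<Omega> a b powr p))}"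

definition APlam :: "('h::{real_inner,complete_space} \<Rightarrow> 'h) \<Rightarrow> (('h \<Rightarrow>\<^sub>L 'h) \<Rightarrow> 'y::real_normed_vector)
     \<Rightarrow> real \<Rightarrow> (complex ^ 'n::finite) set \<Rightarrow> real \<Rightarrow> real" where
  "APlam J U lam \<Omega> p = Sup {(\<Sum>i\<in>UNIV. r $ i) / real CARD('n) | r :: real ^ 'n. (\<forall>i. 0 \<le> r $ i) \<and>
     (\<forall>a b. PH J \<Omega> a b \<longrightarrow>
        infsum (\<lambda>\<alpha>. ennreal ((norm (U (a \<alpha>)) powr p + norm (U (b \<alpha>)) powr p)
                                * rpow r \<alpha> powr p)) UNIV
        \<le> ennreal (lam powr p * supnorm J \<Omega> a b powr p))}"

definition disc1 :: "(complex ^ 1) set" where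
  "disc1 = {z. cmod (z $ 1) < 1}"

definition lq_norm :: "ereal \<Rightarrow> complex ^ 'n::finite \<Rightarrow> real" where
  "lq_norm q z = (if q = \<infinity> then Max (range (\<lambda>i. cmod (z $ i)))
                  else (\<Sum>i\<in>UNIV. cmod (z $ i) powr real_of_ereal q) powr (1 / real_of_ereal q))"

definition lq_ball :: "ereal \<Rightarrow> (complex ^ 'n::finite) set" where
  "lq_ball q = {z. lq_norm q z < 1}"

definition qinv :: "ereal \<Rightarrow> real" where
  "qinv q = (if q = \<infinity> then 0 else 1 / real_of_ereal q)"

end

theory Submission
  imports Defs
begin

lemma inner_unique:
  fixes z1 z2 :: "'a::real_inner"
  assumes "\<And>x. inner x z1 = inner x z2" shows "z1 = z2"
proof -
  have "inner (z1 - z2) z1 = inner (z1 - z2) z2" using assms by blast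
  then have "inner (z1 - z2) (z1 - z2) = 0" by (simp add: inner_diff_right)
  then show ?thesis by simp
qed

lemma riesz_aux_quad:
  fixes a b :: real
  assumes "b \<ge> 0" and "\<And>t. 0 \<le> 2 * t * a + t^2 * b"
  shows "a = 0"
proof (rule ccontr)
  assume "a \<noteq> 0"
  define t where "t = - a / (b + 1)"
  have b1: "b + 1 > 0" using assms(1) by simp
  have "0 \<le> 2 * t * a + t^2 * b" using assms(2) by blast
  have e1: "2 * t * a = - 2 * (a^2 / (b+1))" unfolding t_def by (simp add: power2_eq_square)
  have e2: "t^2 * b = (a^2 / (b+1)) * (b / (b+1))" unfolding t_def by (simp add: power2_eq_square field_simps)
  have "b / (b+1) \<le> 1" using b1 by simp
  moreover have "a^2 / (b+1) > 0" using \<open>a \<noteq> 0\<close> b1 by simp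
  ultimately have "t^2 * b \<le> a^2 / (b+1)" unfolding e2 by (intro mult_left_le) auto
  then have "2 * t * a + t^2 * b < 0" using e1 \<open>a^2 / (b+1) > 0\<close> by linarith
  then show False using \<open>0 \<le> 2 * t * a + t^2 * b\<close> by linarith
qed

lemma lin_helper: "(A::real) \<le> 2*X+2*Y-4*D \<Longrightarrow> X \<le> D + a \<Longrightarrow> Y \<le> D + b \<Longrightarrow> A \<le> 2*(D+a)+2*(D+b)-4*D"
  by (simp add: algebra_simps)

lemma riesz_rep:
  fixes f :: "'h::{real_inner,complete_space} \<Rightarrow> real"
  assumes bl: "bounded_linear f"
  shows "\<exists>z. \<forall>x. f x = inner x z"
proof (cases "\<forall>x. f x = 0")
  case True then show ?thesis by (intro exI[of _ 0]) simp
next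
  case False
  then obtain x1 where x1: "f x1 \<noteq> 0" by blast
  interpret f: bounded_linear f by fact
  define C where "C = {x. f x = 1}"
  have x1C: "x1 /\<^sub>R f x1 \<in> C" using x1 by (simp add: C_def f.scaleR)
  define d where "d = Inf (norm ` C)"
  have bdd: "bdd_below (norm ` C)" by (intro bdd_belowI[of _ 0]) auto
  have d_le: "d \<le> norm x" if "x \<in> C" for x
    unfolding d_def using bdd that by (intro cInf_lower) auto
  have d0: "0 \<le> d" unfolding d_def using x1C by (intro cInf_greatest) auto
  have "\<exists>x\<in>C. norm x < sqrt (d^2 + 1 / (Suc n))" for n
  proof -
    have "d = sqrt (d^2)" using d0 by simp
    also have "\<dots> < sqrt (d^2 + 1 / (Suc n))" by (intro real_sqrt_less_mono) simp
    finally have "d < sqrt (d^2 + 1 / (Suc n))" .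
    then have "Inf (norm ` C) < sqrt (d^2 + 1 / (Suc n))" by (simp add: d_def)
    then obtain v where "v \<in> norm ` C" "v < sqrt (d^2 + 1 / (Suc n))"
      using cInf_lessD[of "norm ` C"] x1C by blast
    then show ?thesis by auto
  qed
  then obtain xs where xsC: "\<And>n. xs n \<in> C" and xsn: "\<And>n. norm (xs n) < sqrt (d^2 + 1 / (Suc n))"
    by metis
  have xsn2: "(norm (xs n))^2 \<le> d^2 + 1 / (Suc n)" for n
  proof -
    have "norm (xs n) \<le> sqrt (d^2 + 1 / (Suc n))" using xsn[of n] by simp
    then have "(norm (xs n))^2 \<le> (sqrt (d^2 + 1 / (Suc n)))^2" by (intro power_mono) auto
    then show ?thesis by (simp add: add_nonneg_nonneg)
  qed
  have para: "(norm (x - y))^2 \<le> 2 * (norm x)^2 + 2 * (norm y)^2 - 4 * d^2"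
    if "x \<in> C" "y \<in> C" for x y
  proof -
    have mid: "(1/2) *\<^sub>R (x + y) \<in> C" using that by (simp add: C_def f.scaleR f.add)
    have "d \<le> norm ((1/2) *\<^sub>R (x + y))" using d_le[OF mid] .
    then have "d \<le> norm (x + y) / 2" by simp
    then have "d^2 \<le> (norm (x + y) / 2)^2" using d0 by (intro power_mono) auto
    then have h: "4 * d^2 \<le> (norm (x+y))^2" by (simp add: power_divide)
    have "(norm (x - y))^2 + (norm (x + y))^2 = 2 * (norm x)^2 + 2 * (norm y)^2"
      by (simp add: power2_norm_eq_inner inner_diff_left inner_diff_right inner_add_left inner_add_right inner_commute)
    then show ?thesis using h by linarith
  qed
  have cau: "Cauchy xs"
  proof (rule metric_CauchyI)
    fix e :: real assume e: "e > 0"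
    obtain N :: nat where N: "4 / e^2 < N" using reals_Archimedean2 by blast
    have "0 < 4 / e^2" using e by simp
    then have "0 < real N" using N by linarith
    then have Npos: "N > 0" by simp
    show "\<exists>M. \<forall>m\<ge>M. \<forall>n\<ge>M. dist (xs m) (xs n) < e"
    proof (intro exI[of _ N] allI impI)
      fix m n assume mN: "m \<ge> N" and nN: "n \<ge> N"
      have "(norm (xs m - xs n))^2 \<le> 2 * (d^2 + 1/Suc m) + 2 * (d^2 + 1/Suc n) - 4 * d^2"
        using para[OF xsC[of m] xsC[of n]] xsn2[of m] xsn2[of n] by (smt (verit))
      also have "\<dots> = 2 / Suc m + 2 / Suc n" by simp
      also have "\<dots> < 2 / N + 2 / N"
        using mN nN Npos by (intro add_strict_mono divide_strict_left_mono) auto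
      also have "\<dots> = 4 / N" by simp
      also have "\<dots> < e^2" using N e Npos by (simp add: field_simps)
      finally have "(norm (xs m - xs n))^2 < e^2" .
      then have "norm (xs m - xs n) < e" using e by (smt (verit) power_mono)
      then show "dist (xs m) (xs n) < e" by (simp add: dist_norm)
    qed
  qed
  then obtain z0 where z0: "xs \<longlonglongrightarrow> z0" using Cauchy_convergent_iff convergent_def by blast
  have fz0: "f z0 = 1"
  proof -
    have "(\<lambda>n. f (xs n)) \<longlonglongrightarrow> f z0" using z0 f.tendsto by blast
    moreover have "(\<lambda>n. f (xs n)) = (\<lambda>n. 1)" using xsC by (auto simp: C_def)
    ultimately show ?thesis using LIMSEQ_const_iff by metis
  qed
  have z0min: "norm z0 \<le> norm y" if "y \<in> C" for y
  proof -
    have l1: "(\<lambda>n. (norm (xs n))^2) \<longlonglongrightarrow> (norm z0)^2"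
      by (intro tendsto_intros z0)
    have l2: "(\<lambda>n. d^2 + 1 / real (Suc n)) \<longlonglongrightarrow> d^2 + 0"
      by (intro tendsto_intros LIMSEQ_inverse_real_of_nat[unfolded inverse_eq_divide])
    have "(norm z0)^2 \<le> d^2 + 0" using LIMSEQ_le[OF l1 l2] xsn2 by blast
    also have "\<dots> \<le> (norm y)^2" using d_le[OF that] d0 by (simp add: power_mono)
    finally show ?thesis by (simp add: power2_le_iff_abs_le)
  qed
  have orth: "inner z0 y = 0" if "f y = 0" for y
  proof -
    have "0 \<le> 2 * t * inner z0 y + t^2 * inner y y" for t
    proof -
      have "z0 + t *\<^sub>R y \<in> C" using fz0 that by (simp add: C_def f.add f.scaleR)
      then have "norm z0 \<le> norm (z0 + t *\<^sub>R y)" by (rule z0min)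
      then have "(norm z0)^2 \<le> (norm (z0 + t *\<^sub>R y))^2" by (simp add: power_mono)
      then have "inner z0 z0 \<le> inner (z0 + t *\<^sub>R y) (z0 + t *\<^sub>R y)"
        by (simp only: power2_norm_eq_inner)
      then show ?thesis
        by (simp add: inner_add_left inner_add_right inner_commute power2_eq_square algebra_simps)
    qed
    then show ?thesis by (intro riesz_aux_quad[of "inner y y"]) auto
  qed
  have nz: "inner z0 z0 \<noteq> 0" using fz0 by auto
  show ?thesis
  proof (intro exI allI)
    fix x
    have "f (x - f x *\<^sub>R z0) = 0" using fz0 by (simp add: f.diff f.scaleR)
    then have "inner z0 (x - f x *\<^sub>R z0) = 0" by (rule orth)
    then have "inner z0 x = f x * inner z0 z0" by (simp add: inner_diff_right)
    then show "f x = inner x ((1 / inner z0 z0) *\<^sub>R z0)"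
      using nz by (simp add: inner_commute field_simps)
  qed
qed

lemma adjoint_exists:
  fixes T :: "'h::{real_inner,complete_space} \<Rightarrow>\<^sub>L 'h"
  shows "\<exists>S. \<forall>x y. inner (blinfun_apply T x) y = inner x (blinfun_apply S y)"
proof -
  have ex: "\<exists>z. \<forall>x. inner (T x) y = inner x z" for y
    by (intro riesz_rep bounded_linear_compose[OF bounded_linear_inner_left blinfun.bounded_linear_right])
  define S0 where "S0 y = (SOME z. \<forall>x. inner (T x) y = inner x z)" for y
  have S0: "inner (T x) y = inner x (S0 y)" for x y
    using someI_ex[OF ex[of y]] unfolding S0_def by blast
  have lin: "linear S0"
  proof
    fix y1 y2 show "S0 (y1 + y2) = S0 y1 + S0 y2"
      by (rule inner_unique) (simp add: S0[symmetric] inner_add_right)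
  next
    fix c y show "S0 (c *\<^sub>R y) = c *\<^sub>R S0 y"
      by (rule inner_unique) (simp add: S0[symmetric])
  qed
  have bnd: "norm (S0 y) \<le> norm y * norm T" for y
  proof -
    have "(norm (S0 y))^2 = inner (T (S0 y)) y" by (simp add: S0 power2_norm_eq_inner)
    also have "\<dots> \<le> norm (T (S0 y)) * norm y" by (rule Cauchy_Schwarz_ineq2[THEN order_trans[OF abs_ge_self]])
    also have "\<dots> \<le> norm T * norm (S0 y) * norm y"
      by (intro mult_right_mono norm_blinfun) auto
    finally have "norm (S0 y) * norm (S0 y) \<le> (norm y * norm T) * norm (S0 y)"
      by (simp add: power2_eq_square algebra_simps)
    then show ?thesis
      by (cases "norm (S0 y) = 0") (auto simp: mult_le_cancel_right)
  qed
  have bl: "bounded_linear S0"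
    using lin bnd by (intro bounded_linear_intro[of _ "norm T"]) (auto simp: linear_add linear_scale)
  show ?thesis
    by (intro exI[of _ "Blinfun S0"]) (simp add: bounded_linear_Blinfun_apply[OF bl] S0)
qed

lemma hadj_prop:
  fixes T :: "'h::{real_inner,complete_space} \<Rightarrow>\<^sub>L 'h"
  shows "inner (blinfun_apply T x) y = inner x (blinfun_apply (hadj T) y)"
proof -
  have ex1: "\<exists>!S. \<forall>x y. inner (blinfun_apply T x) y = inner x (blinfun_apply S y)"
  proof -
    obtain S where S: "\<forall>x y. inner (blinfun_apply T x) y = inner x (blinfun_apply S y)"
      using adjoint_exists by blast
    moreover have "S' = S" if "\<forall>x y. inner (blinfun_apply T x) y = inner x (blinfun_apply S' y)" for S'
    proof (rule blinfun_eqI, rule inner_unique)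
      fix x y show "inner x (blinfun_apply S' y) = inner x (blinfun_apply S y)"
      proof -
        have "inner x (blinfun_apply S' y) = inner (blinfun_apply T x) y" using that by simp
        also have "\<dots> = inner x (blinfun_apply S y)" using S by simp
        finally show ?thesis .
      qed
    qed
    ultimately show ?thesis by blast
  qed
  show ?thesis using theI'[OF ex1] unfolding hadj_def by blast
qed

lemma hadj_eqI:
  fixes T S :: "'h::{real_inner,complete_space} \<Rightarrow>\<^sub>L 'h"
  assumes "\<And>x y. inner (blinfun_apply T x) y = inner x (blinfun_apply S y)"
  shows "hadj T = S"
proof (rule blinfun_eqI, rule inner_unique)
  fix x y show "inner x (blinfun_apply (hadj T) y) = inner x (blinfun_apply S y)"
    using assms[of x y] hadj_prop[of T x y] by simp
qed

lemma hadj_scaleR: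
  fixes T :: "'h::{real_inner,complete_space} \<Rightarrow>\<^sub>L 'h"
  shows "hadj (c *\<^sub>R T) = c *\<^sub>R hadj T"
proof (rule hadj_eqI)
  fix x y show "inner (blinfun_apply (c *\<^sub>R T) x) y = inner x (blinfun_apply (c *\<^sub>R hadj T) y)"
    using hadj_prop[of T x y] by (simp add: blinfun.scaleR_left)
qed

lemma hadj_zero: "hadj (0 :: 'h::{real_inner,complete_space} \<Rightarrow>\<^sub>L 'h) = 0"
  by (rule hadj_eqI) simp

lemma cstruct_J_norm:
  assumes "cstruct_hilbert J" shows "norm (J x) = norm x"
proof -
  have "inner (J x) (J x) = inner x x" using assms unfolding cstruct_hilbert_def by blast
  then show ?thesis by (simp add: norm_eq_sqrt_inner)
qed

lemma cstruct_J_bl: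
  assumes "cstruct_hilbert J" shows "bounded_linear J"
proof -
  have "linear J" using assms unfolding cstruct_hilbert_def by blast
  then show ?thesis
    using cstruct_J_norm[OF assms] by (intro bounded_linear_intro[of _ 1]) (auto simp: linear_add linear_scale)
qed

lemma cstruct_J_blinfun_norm:
  assumes "cstruct_hilbert J" shows "norm (Blinfun J) \<le> 1"
  by (rule norm_blinfun_bound) (simp_all add: bounded_linear_Blinfun_apply[OF cstruct_J_bl[OF assms]] cstruct_J_norm[OF assms])

lemma cmul_norm_le:
  assumes "cstruct_hilbert J" shows "norm (cmul J c T) \<le> 2 * cmod c * norm T"
proof -
  have "norm (cmul J c T) \<le> norm (Re c *\<^sub>R T) + norm (Im c *\<^sub>R (Blinfun J o\<^sub>L T))"
    unfolding cmul_def by (rule norm_triangle_ineq)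
  also have "\<dots> \<le> cmod c * norm T + cmod c * norm T"
  proof (intro add_mono)
    show "norm (Re c *\<^sub>R T) \<le> cmod c * norm T" using abs_Re_le_cmod[of c] by (simp add: mult_right_mono)
    have "norm (Blinfun J o\<^sub>L T) \<le> norm (Blinfun J) * norm T" by (rule norm_blinfun_compose)
    also have "\<dots> \<le> 1 * norm T" using cstruct_J_blinfun_norm[OF assms] by (intro mult_right_mono) auto
    finally have "norm (Blinfun J o\<^sub>L T) \<le> norm T" by simp
    then show "norm (Im c *\<^sub>R (Blinfun J o\<^sub>L T)) \<le> cmod c * norm T"
      using abs_Im_le_cmod[of c] by (simp add: mult_mono)
  qed
  finally show ?thesis by simp
qed

lemma cmul_of_real[simp]: "cmul J (of_real r) T = r *\<^sub>R T"
  by (simp add: cmul_def)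

lemma cmul_zero_left[simp]: "cmul J 0 T = 0"
  by (simp add: cmul_def)

lemma cmul_one[simp]: "cmul J 1 T = T"
  by (simp add: cmul_def)

lemma compose_scaleR_right: "A o\<^sub>L (r *\<^sub>R T) = r *\<^sub>R (A o\<^sub>L T)"
  by (rule blinfun_eqI) (simp add: blinfun.scaleR_right blinfun.scaleR_left)

lemma cmul_scaleR_right: "cmul J c (r *\<^sub>R T) = cmul J (of_real r * c) T"
  by (simp add: cmul_def compose_scaleR_right mult.commute)

lemma cmul_add_left: "cmul J (c1 + c2) T = cmul J c1 T + cmul J c2 T"
  by (simp add: cmul_def scaleR_add_left)

lemma cmul_sum_left: "cmul J (sum f A) T = (\<Sum>i\<in>A. cmul J (f i) T)"
proof (induction A rule: infinite_finite_induct)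
  case (insert x F) then show ?case by (simp add: cmul_add_left)
qed auto

lemma BH_zero: assumes "cstruct_hilbert J" shows "0 \<in> BH J"
proof -
  have lin: "linear J" using assms(1) unfolding cstruct_hilbert_def by blast
  show ?thesis by (simp add: BH_def linear_0[OF lin])
qed

lemma BH_scaleR:
  assumes "cstruct_hilbert J" "T \<in> BH J" shows "r *\<^sub>R T \<in> BH J"
proof -
  have lin: "linear J" using assms(1) unfolding cstruct_hilbert_def by blast
  show ?thesis using assms(2) by (simp add: BH_def linear_scale[OF lin] blinfun.scaleR_left)
qed

lemma cscale_of_real[simp]: "cscale JY (of_real r) y = r *\<^sub>R y"
  by (simp add: cscale_def)

lemma U_scaleR:
  assumes "cbounded_linear_on J JY U" "T \<in> BH J"
  shows "U (r *\<^sub>R T) = r *\<^sub>R U T"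
proof -
  have "U (cmul J (of_real r) T) = cscale JY (of_real r) (U T)"
    using assms unfolding cbounded_linear_on_def by blast
  then show ?thesis by simp
qed

lemma U_zero:
  assumes "cstruct_hilbert J" "cbounded_linear_on J JY U" shows "U 0 = 0"
  using U_scaleR[OF assms(2) BH_zero[OF assms(1)], of 0] by simp

lemma U_norm_scaleR:
  assumes "cbounded_linear_on J JY U" "T \<in> BH J"
  shows "norm (U (r *\<^sub>R T)) = \<bar>r\<bar> * norm (U T)"
  using U_scaleR[OF assms] by simp

lemma opnorm_props:
  assumes hJ: "cstruct_hilbert J" and hU: "cbounded_linear_on J JY U"
  shows "0 \<le> opnorm J U" and "\<And>T. T \<in> BH J \<Longrightarrow> norm (U T) \<le> opnorm J U * norm T"
proof -
  define X where "X = {norm (U T) | T. T \<in> BH J \<and> norm T \<le> 1}"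
  obtain K where K: "\<And>T. T \<in> BH J \<Longrightarrow> norm (U T) \<le> K * norm T"
    using hU unfolding cbounded_linear_on_def by blast
  have bdd: "bdd_above X" unfolding X_def
  proof (rule bdd_aboveI[of _ "max K 0"])
    fix x assume "x \<in> {norm (U T) | T. T \<in> BH J \<and> norm T \<le> 1}"
    then obtain T where T: "x = norm (U T)" "T \<in> BH J" "norm T \<le> 1" by blast
    have "K * norm T \<le> max K 0 * norm T" by (intro mult_right_mono) auto
    also have "\<dots> \<le> max K 0 * 1" using T(3) by (intro mult_left_mono) auto
    finally show "x \<le> max K 0" using K[OF T(2)] T(1) by simp
  qed
  have X0: "0 \<in> X" unfolding X_def using U_zero[OF hJ hU] BH_zero[OF hJ] by (auto intro!: exI[of _ 0])
  show "0 \<le> opnorm J U" unfolding opnorm_def X_def[symmetric] using cSup_upper[OF X0 bdd] .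
  fix T assume T: "T \<in> BH J"
  show "norm (U T) \<le> opnorm J U * norm T"
  proof (cases "T = 0")
    case True then show ?thesis using U_zero[OF hJ hU] by simp
  next
    case False
    then have nT: "norm T > 0" by simp
    have "(1 / norm T) *\<^sub>R T \<in> BH J" by (rule BH_scaleR[OF hJ T])
    moreover have "norm ((1 / norm T) *\<^sub>R T) \<le> 1" using nT by simp
    ultimately have "norm (U ((1 / norm T) *\<^sub>R T)) \<in> X" unfolding X_def by blast
    then have "norm (U ((1 / norm T) *\<^sub>R T)) \<le> opnorm J U"
      unfolding opnorm_def X_def[symmetric] by (rule cSup_upper[OF _ bdd])
    then have "norm (U T) / norm T \<le> opnorm J U" using U_norm_scaleR[OF hU T] nT by simp
    then show ?thesis using nT by (simp add: field_simps)
  qed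
qed

lemma zpow_zero: "zpow (0 :: complex ^ 'n::finite) \<alpha> = (if \<alpha> = 0 then 1 else 0)"
proof (cases "\<alpha> = 0")
  case True then show ?thesis by (simp add: zpow_def)
next
  case False
  then obtain i where "\<alpha> $ i \<noteq> 0" by (metis vec_eq_iff zero_index)
  then show ?thesis using False unfolding zpow_def by (intro trans[OF prod_zero]) (auto intro!: bexI[of _ i])
qed

lemma rpow_zero: "rpow (0 :: real ^ 'n::finite) \<alpha> = (if \<alpha> = 0 then 1 else 0)"
proof (cases "\<alpha> = 0")
  case True then show ?thesis by (simp add: rpow_def)
next
  case False
  then obtain i where "\<alpha> $ i \<noteq> 0" by (metis vec_eq_iff zero_index)
  then show ?thesis using False unfolding rpow_def by (intro trans[OF prod_zero]) (auto intro!: bexI[of _ i])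
qed

lemma infsum_at_zero_only:
  fixes f :: "'a \<Rightarrow> 'b::{topological_comm_monoid_add, t2_space}"
  assumes "\<And>x. x \<noteq> a \<Longrightarrow> f x = 0"
  shows "infsum f UNIV = f a"
proof -
  have "infsum f UNIV = infsum f {a}" by (rule infsum_cong_neutral) (use assms in auto)
  then show ?thesis by simp
qed

lemma phf_at_zero:
  fixes J :: "'h::{real_inner,complete_space} \<Rightarrow> 'h"
  assumes "b 0 = 0"
  shows "phf J a b (0 :: complex ^ 'n::finite) = a 0"
proof -
  have "infsum (\<lambda>\<alpha>. cmul J (zpow (0::complex^'n) \<alpha>) (a \<alpha>)) UNIV = cmul J (zpow (0::complex^'n) 0) (a 0)"
    by (rule infsum_at_zero_only) (simp add: zpow_zero)
  moreover have "infsum (\<lambda>\<alpha>. cmul J (cnj (zpow (0::complex^'n) \<alpha>)) (hadj (b \<alpha>))) UNIV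
      = cmul J (cnj (zpow (0::complex^'n) 0)) (hadj (b 0))"
    by (rule infsum_at_zero_only) (simp add: zpow_zero)
  ultimately show ?thesis unfolding phf_def using assms by (simp add: zpow_zero hadj_zero)
qed

lemma supnorm_ge:
  assumes "PH J \<Omega> a b" "z \<in> \<Omega>"
  shows "norm (phf J a b z) \<le> supnorm J \<Omega> a b"
proof -
  have "bounded (phf J a b ` \<Omega>)" using assms(1) unfolding PH_def by blast
  then obtain B where B: "\<And>y. y \<in> phf J a b ` \<Omega> \<Longrightarrow> norm y \<le> B" by (meson bounded_iff)
  then have "bdd_above ((\<lambda>z. norm (phf J a b z)) ` \<Omega>)"
    by (intro bdd_aboveI2[of _ _ B]) auto
  then show ?thesis unfolding supnorm_def by (rule cSUP_upper[OF assms(2)])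
qed

lemma supnorm_nonneg:
  assumes "PH J \<Omega> a b" "z \<in> \<Omega>"
  shows "0 \<le> supnorm J \<Omega> a b"
  using supnorm_ge[OF assms] norm_ge_zero order_trans by blast

lemma zero_coeff_bound:
  fixes J :: "'h::{real_inner,complete_space} \<Rightarrow> 'h"
  assumes hJ: "cstruct_hilbert J" and hU: "cbounded_linear_on J JY U"
    and lam: "opnorm J U < lam" and p: "1 \<le> p"
    and PH: "PH J \<Omega> a b" and z0: "(0 :: complex ^ 'n::finite) \<in> \<Omega>"
  shows "norm (U (a 0)) powr p + norm (U (b 0)) powr p \<le> lam powr p * supnorm J \<Omega> a b powr p"
proof -
  have b0: "b 0 = 0" and a0: "a 0 \<in> BH J" using PH unfolding PH_def by auto
  have "norm (U (a 0)) \<le> opnorm J U * norm (a 0)" using opnorm_props(2)[OF hJ hU a0] .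
  also have "\<dots> \<le> lam * supnorm J \<Omega> a b"
  proof (intro mult_mono)
    have "phf J a b (0::complex^'n) = a 0" by (rule phf_at_zero) (rule b0)
    then show "norm (a 0) \<le> supnorm J \<Omega> a b" using supnorm_ge[OF PH z0] by simp
  qed (use lam opnorm_props(1)[OF hJ hU] in auto)
  finally have le: "norm (U (a 0)) \<le> lam * supnorm J \<Omega> a b" .
  have "norm (U (a 0)) powr p \<le> (lam * supnorm J \<Omega> a b) powr p"
    using le p by (intro powr_mono2) auto
  also have "\<dots> = lam powr p * supnorm J \<Omega> a b powr p"
    using lam opnorm_props(1)[OF hJ hU] supnorm_nonneg[OF PH z0] by (auto intro!: powr_mult)
  finally show ?thesis using p by (simp add: b0 U_zero[OF hJ hU])
qed

definition deg :: "nat ^ 'n::finite \<Rightarrow> nat" where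
  "deg \<alpha> = (\<Sum>i\<in>UNIV. \<alpha> $ i)"

definition cnt :: "(nat \<Rightarrow> 'n::finite) \<Rightarrow> nat \<Rightarrow> nat ^ 'n" where
  "cnt w k = (\<chi> i. card {j. j < k \<and> w j = i})"

definition words :: "nat \<Rightarrow> (nat \<Rightarrow> 'n::finite) set" where
  "words k = PiE {..<k} (\<lambda>_. UNIV)"

definition Dk :: "nat \<Rightarrow> (nat ^ 'n::finite) set" where
  "Dk k = {\<alpha>. deg \<alpha> = k}"

definition mult :: "nat ^ 'n::finite \<Rightarrow> nat" where
  "mult \<alpha> = card {w \<in> words (deg \<alpha>). cnt w (deg \<alpha>) = \<alpha>}"

lemma finite_words: "finite (words k :: (nat \<Rightarrow> 'n::finite) set)"
  unfolding words_def by (intro finite_PiE) auto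

lemma finite_bounded_vec: "finite {\<alpha> :: nat ^ 'n::finite. \<forall>i. \<alpha> $ i \<le> k}"
proof -
  have "{\<alpha> :: nat ^ 'n. \<forall>i. \<alpha> $ i \<le> k} \<subseteq> (\<lambda>f. \<chi> i. f i) ` PiE UNIV (\<lambda>_. {..k})"
  proof
    fix \<alpha> :: "nat ^ 'n" assume "\<alpha> \<in> {\<alpha>. \<forall>i. \<alpha> $ i \<le> k}"
    then have "(\<lambda>i. \<alpha> $ i) \<in> PiE UNIV (\<lambda>_. {..k})" by auto
    moreover have "\<alpha> = (\<chi> i. (\<lambda>i. \<alpha> $ i) i)" by simp
    ultimately show "\<alpha> \<in> (\<lambda>f. \<chi> i. f i) ` PiE UNIV (\<lambda>_. {..k})" by blast
  qed
  moreover have "finite ((\<lambda>f. \<chi> i. f i) ` PiE UNIV (\<lambda>_. {..k}) :: (nat^'n) set)"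
    by (intro finite_imageI finite_PiE) auto
  ultimately show ?thesis by (rule finite_subset)
qed

lemma deg_ge_comp: "\<alpha> $ i \<le> deg \<alpha>"
  unfolding deg_def by (rule member_le_sum) auto

lemma finite_deg_le: "finite {\<alpha> :: nat ^ 'n::finite. deg \<alpha> \<le> K}"
  by (rule finite_subset[OF _ finite_bounded_vec[of K]]) (auto intro: order_trans[OF deg_ge_comp])

lemma finite_Dk: "finite (Dk k :: (nat ^ 'n::finite) set)"
  unfolding Dk_def by (rule finite_subset[OF _ finite_deg_le[of k]]) auto

lemma deg_cnt: "deg (cnt (w :: nat \<Rightarrow> 'n::finite) k) = k"
proof -
  have "(\<Sum>i\<in>UNIV. card {j. j < k \<and> w j = i}) = (\<Sum>i\<in>UNIV. \<Sum>j\<in>{j. j \<in> {..<k} \<and> w j = i}. (1::nat))"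
    by simp
  also have "\<dots> = (\<Sum>j\<in>{..<k}. 1)" by (rule sum.group) auto
  finally show ?thesis by (simp add: deg_def cnt_def)
qed

lemma prod_word:
  fixes x :: "'n::finite \<Rightarrow> 'a::comm_monoid_mult"
  shows "(\<Prod>j<k. x (w j)) = (\<Prod>i\<in>UNIV. x i ^ (cnt w k $ i))"
proof -
  have "(\<Prod>j<k. x (w j)) = (\<Prod>i\<in>UNIV. \<Prod>j\<in>{j. j \<in> {..<k} \<and> w j = i}. x (w j))"
    by (rule sym, rule prod.group) auto
  also have "\<dots> = (\<Prod>i\<in>UNIV. \<Prod>j\<in>{j. j \<in> {..<k} \<and> w j = i}. x i)"
    by (intro prod.cong refl) auto
  also have "\<dots> = (\<Prod>i\<in>UNIV. x i ^ (cnt w k $ i))" by (simp add: cnt_def)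
  finally show ?thesis .
qed

lemma multinomial:
  fixes x :: "'n::finite \<Rightarrow> 'a::comm_semiring_1"
  shows "(\<Sum>i\<in>UNIV. x i) ^ k = (\<Sum>\<alpha>\<in>Dk k. of_nat (mult \<alpha>) * (\<Prod>i\<in>UNIV. x i ^ (\<alpha> $ i)))"
proof -
  have "(\<Sum>i\<in>UNIV. x i) ^ k = (\<Prod>j\<in>{..<k}. \<Sum>i\<in>UNIV. x i)" by simp
  also have "\<dots> = (\<Sum>w\<in>words k. \<Prod>j\<in>{..<k}. x (w j))"
    unfolding words_def by (rule prod_sum_PiE) auto
  also have "\<dots> = (\<Sum>w\<in>words k. \<Prod>i\<in>UNIV. x i ^ (cnt w k $ i))"
    by (simp add: prod_word)
  also have "\<dots> = (\<Sum>\<alpha>\<in>Dk k. \<Sum>w\<in>{w. w \<in> words k \<and> cnt w k = \<alpha>}. \<Prod>i\<in>UNIV. x i ^ (cnt w k $ i))"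
    by (rule sym, rule sum.group) (auto simp: finite_words finite_Dk[unfolded Dk_def] Dk_def deg_cnt)
  also have "\<dots> = (\<Sum>\<alpha>\<in>Dk k. of_nat (mult \<alpha>) * (\<Prod>i\<in>UNIV. x i ^ (\<alpha> $ i)))"
  proof (intro sum.cong refl)
    fix \<alpha> :: "nat ^ 'n" assume "\<alpha> \<in> Dk k"
    then have dk: "deg \<alpha> = k" by (simp add: Dk_def)
    have "(\<Sum>w\<in>{w. w \<in> words k \<and> cnt w k = \<alpha>}. \<Prod>i\<in>UNIV. x i ^ (cnt w k $ i))
        = (\<Sum>w\<in>{w. w \<in> words k \<and> cnt w k = \<alpha>}. \<Prod>i\<in>UNIV. x i ^ (\<alpha> $ i))"
      by (intro sum.cong refl) auto
    also have "\<dots> = of_nat (mult \<alpha>) * (\<Prod>i\<in>UNIV. x i ^ (\<alpha> $ i))"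
      by (simp add: mult_def dk)
    finally show "(\<Sum>w\<in>{w. w \<in> words k \<and> cnt w k = \<alpha>}. \<Prod>i\<in>UNIV. x i ^ (cnt w k $ i))
        = of_nat (mult \<alpha>) * (\<Prod>i\<in>UNIV. x i ^ (\<alpha> $ i))" .
  qed
  finally show ?thesis .
qed

lemma coeff_bound:
  fixes C :: "nat \<Rightarrow> ('h::real_normed_vector \<Rightarrow>\<^sub>L 'h)"
  assumes "(\<lambda>k. (s::real) ^ k *\<^sub>R C k) summable_on UNIV"
  shows "\<exists>M. \<forall>k. \<bar>s\<bar> ^ k * norm (C k) \<le> M"
proof -
  have "summable (\<lambda>k. s ^ k *\<^sub>R C k)" using assms by (rule summable_on_imp_summable)
  then have "(\<lambda>k. s ^ k *\<^sub>R C k) \<longlonglongrightarrow> 0" by (rule summable_LIMSEQ_zero)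
  then have "Bseq (\<lambda>k. s ^ k *\<^sub>R C k)" by (intro convergent_imp_Bseq convergentI)
  then obtain K where "\<forall>n. norm (s ^ n *\<^sub>R C n) \<le> K" unfolding Bseq_def by blast
  then show ?thesis by (intro exI[of _ K]) (simp add: power_abs)
qed

lemma geom_partial_le:
  fixes x :: real assumes "0 \<le> x" "x < 1"
  shows "(\<Sum>k\<le>K. x ^ k) \<le> 1 / (1 - x)"
proof -
  have "(\<Sum>k\<le>K. x ^ k) \<le> suminf (\<lambda>k. x ^ k)"
    using assms by (intro sum_le_suminf summable_geometric) auto
  also have "\<dots> = 1 / (1 - x)" using assms by (intro suminf_geometric) auto
  finally show ?thesis .
qed

lemma sum_by_deg:
  fixes h :: "nat ^ 'n::finite \<Rightarrow> 'a::comm_monoid_add"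
  shows "(\<Sum>\<alpha>\<in>{\<alpha>. deg \<alpha> \<le> K}. h \<alpha>) = (\<Sum>k\<le>K. \<Sum>\<alpha>\<in>Dk k. h \<alpha>)"
proof -
  have "(\<Sum>k\<le>K. \<Sum>\<alpha>\<in>{\<alpha>. \<alpha> \<in> {\<alpha>. deg \<alpha> \<le> K} \<and> deg \<alpha> = k}. h \<alpha>) = (\<Sum>\<alpha>\<in>{\<alpha>. deg \<alpha> \<le> K}. h \<alpha>)"
    by (rule sum.group) (auto simp: finite_deg_le)
  moreover have "{\<alpha>. \<alpha> \<in> {\<alpha>. deg \<alpha> \<le> K} \<and> deg \<alpha> = k} = Dk k" if "k \<le> K" for k
    using that by (auto simp: Dk_def)
  moreover have "(\<Sum>k\<le>K. \<Sum>\<alpha>\<in>Dk k. h \<alpha>) = (\<Sum>k\<le>K. \<Sum>\<alpha>\<in>{\<alpha>. \<alpha> \<in> {\<alpha>. deg \<alpha> \<le> K} \<and> deg \<alpha> = k}. h \<alpha>)"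
    by (rule sum.cong[OF refl], rule sum.cong) (auto simp: Dk_def)
  ultimately show ?thesis by simp
qed

lemma geom_tail_le:
  fixes x :: real assumes "0 \<le> x" "x < 1"
  shows "(\<Sum>k\<in>{K..K'}. x ^ k) \<le> x ^ K / (1 - x)"
proof (cases "K \<le> K'")
  case True
  have "(\<Sum>k\<in>{K..K'}. x ^ k) = (\<Sum>j\<le>K' - K. x ^ (j + K))"
    using True by (intro sum.reindex_bij_witness[of _ "\<lambda>k. k + K" "\<lambda>k. k - K"]) auto
  also have "\<dots> = x ^ K * (\<Sum>j\<le>K' - K. x ^ j)" by (simp add: sum_distrib_left power_add mult.commute)
  also have "\<dots> \<le> x ^ K * (1 / (1 - x))" using assms by (intro mult_left_mono geom_partial_le) auto
  finally show ?thesis by simp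
next
  case False then show ?thesis using assms by simp
qed

lemma series_regroup:
  fixes J :: "'h::{real_inner,complete_space} \<Rightarrow> 'h"
    and C :: "nat \<Rightarrow> ('h \<Rightarrow>\<^sub>L 'h)" and \<omega> :: "nat ^ 'n::finite \<Rightarrow> complex"
  assumes hJ: "cstruct_hilbert J"
    and bound: "\<And>k. t' ^ k * norm (C k) \<le> M"
    and t: "0 \<le> t" "t < t'"
    and om: "\<And>k. (\<Sum>\<alpha>\<in>Dk k. cmod (\<omega> \<alpha>)) \<le> t ^ k"
    and summG: "(\<lambda>k. cmul J (\<Sum>\<alpha>\<in>Dk k. \<omega> \<alpha>) (C k)) summable_on UNIV"
  shows "((\<lambda>\<alpha>. cmul J (\<omega> \<alpha>) (C (deg \<alpha>))) has_sum
            infsum (\<lambda>k. cmul J (\<Sum>\<alpha>\<in>Dk k. \<omega> \<alpha>) (C k)) UNIV) UNIV"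
proof -
  define F where "F \<alpha> = cmul J (\<omega> \<alpha>) (C (deg \<alpha>))" for \<alpha>
  define G where "G k = cmul J (\<Sum>\<alpha>\<in>Dk k. \<omega> \<alpha>) (C k)" for k
  define S where "S = infsum G UNIV"
  have t'pos: "t' > 0" using t by linarith
  define x where "x = t / t'"
  have x: "0 \<le> x" "x < 1" using t t'pos by (auto simp: x_def)
  have M0: "0 \<le> M" using bound[of 0] by (metis norm_ge_zero order_trans power_0 mult_1)
  have Ck: "t ^ k * norm (C k) \<le> M * x ^ k" for k
  proof -
    have "t ^ k * norm (C k) = x ^ k * (t' ^ k * norm (C k))"
      using t'pos by (simp add: x_def power_divide)
    also have "\<dots> \<le> x ^ k * M" using x bound[of k] by (intro mult_left_mono) auto
    finally show ?thesis by (simp add: mult.commute)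
  qed
  have NF: "norm (F \<alpha>) \<le> 2 * cmod (\<omega> \<alpha>) * norm (C (deg \<alpha>))" for \<alpha>
    unfolding F_def by (rule cmul_norm_le[OF hJ])
  have blk: "(\<Sum>\<alpha>\<in>Dk k. norm (F \<alpha>)) \<le> 2 * M * x ^ k" for k
  proof -
    have "(\<Sum>\<alpha>\<in>Dk k. norm (F \<alpha>)) \<le> (\<Sum>\<alpha>\<in>Dk k. 2 * cmod (\<omega> \<alpha>) * norm (C k))"
      by (intro sum_mono) (use NF in \<open>auto simp: Dk_def\<close>)
    also have "\<dots> = 2 * norm (C k) * (\<Sum>\<alpha>\<in>Dk k. cmod (\<omega> \<alpha>))"
      by (simp add: sum_distrib_left sum_distrib_right mult.commute mult.left_commute)
    also have "\<dots> \<le> 2 * norm (C k) * t ^ k" using om[of k] by (intro mult_left_mono) auto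
    also have "\<dots> \<le> 2 * (M * x ^ k)" using Ck[of k] by (simp add: mult.commute)
    finally show ?thesis by simp
  qed
  have GF: "(\<Sum>\<alpha>\<in>{\<alpha>. deg \<alpha> < K}. F \<alpha>) = (\<Sum>k<K. G k)" for K
  proof (cases K)
    case 0 then show ?thesis by simp
  next
    case (Suc K0)
    have "{\<alpha> :: nat ^ 'n. deg \<alpha> < K} = {\<alpha>. deg \<alpha> \<le> K0}" using Suc by auto
    then have "(\<Sum>\<alpha>\<in>{\<alpha>. deg \<alpha> < K}. F \<alpha>) = (\<Sum>k\<le>K0. \<Sum>\<alpha>\<in>Dk k. F \<alpha>)"
      using sum_by_deg[of F K0] by simp
    also have "\<dots> = (\<Sum>k\<le>K0. G k)"
    proof (intro sum.cong refl)
      fix k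
      have "(\<Sum>\<alpha>\<in>Dk k. F \<alpha>) = (\<Sum>\<alpha>\<in>Dk k. cmul J (\<omega> \<alpha>) (C k))"
        by (intro sum.cong refl) (simp add: F_def Dk_def)
      also have "\<dots> = G k" by (simp add: cmul_sum_left G_def)
      finally show "(\<Sum>\<alpha>\<in>Dk k. F \<alpha>) = G k" .
    qed
    also have "\<dots> = (\<Sum>k<K. G k)" using Suc by (simp add: lessThan_Suc_atMost)
    finally show ?thesis .
  qed
  have tail: "norm (sum F H) \<le> 2 * M * (x ^ K / (1 - x))"
    if H: "finite H" "\<And>\<alpha>. \<alpha> \<in> H \<Longrightarrow> K \<le> deg \<alpha>" for H K
  proof -
    define K' where "K' = (\<Sum>\<alpha>\<in>H. deg \<alpha>)"
    have HK: "H \<subseteq> {\<alpha>. K \<le> deg \<alpha> \<and> deg \<alpha> \<le> K'}"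
      using H unfolding K'_def by (auto intro: member_le_sum)
    have fin: "finite {\<alpha> :: nat ^ 'n. K \<le> deg \<alpha> \<and> deg \<alpha> \<le> K'}"
      by (rule finite_subset[OF _ finite_deg_le[of K']]) auto
    have "norm (sum F H) \<le> (\<Sum>\<alpha>\<in>H. norm (F \<alpha>))" by (rule norm_sum)
    also have "\<dots> \<le> (\<Sum>\<alpha>\<in>{\<alpha>. K \<le> deg \<alpha> \<and> deg \<alpha> \<le> K'}. norm (F \<alpha>))"
      using HK fin by (intro sum_mono2) auto
    also have "\<dots> = (\<Sum>k\<in>{K..K'}. \<Sum>\<alpha>\<in>{\<alpha>. \<alpha> \<in> {\<alpha>. K \<le> deg \<alpha> \<and> deg \<alpha> \<le> K'} \<and> deg \<alpha> = k}. norm (F \<alpha>))"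
      by (rule sym, rule sum.group) (use fin in auto)
    also have "\<dots> = (\<Sum>k\<in>{K..K'}. \<Sum>\<alpha>\<in>Dk k. norm (F \<alpha>))"
      by (rule sum.cong[OF refl], rule sum.cong) (auto simp: Dk_def)
    also have "\<dots> \<le> (\<Sum>k\<in>{K..K'}. 2 * M * x ^ k)" by (intro sum_mono blk)
    also have "\<dots> = 2 * M * (\<Sum>k\<in>{K..K'}. x ^ k)" by (simp add: sum_distrib_left)
    also have "\<dots> \<le> 2 * M * (x ^ K / (1 - x))" using M0 geom_tail_le[OF x] by (intro mult_left_mono) auto
    finally show ?thesis .
  qed
  have sumsG: "G sums S" unfolding S_def
    using summG unfolding G_def[symmetric] by (intro has_sum_imp_sums has_sum_infsum)
  have "(sum F \<longlongrightarrow> S) (finite_subsets_at_top UNIV)"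
  proof (rule tendstoI)
    fix e :: real assume e: "e > 0"
    have ev1: "eventually (\<lambda>K. dist (\<Sum>k<K. G k) S < e / 2) sequentially"
      using sumsG e unfolding sums_def by (intro tendstoD) auto
    have "(\<lambda>K. 2 * M * (x ^ K / (1 - x))) \<longlonglongrightarrow> 2 * M * (0 / (1 - x))"
      using x by (intro tendsto_intros LIMSEQ_power_zero) auto
    then have ev2: "eventually (\<lambda>K. dist (2 * M * (x ^ K / (1 - x))) 0 < e / 2) sequentially"
      using e by (intro tendstoD) auto
    obtain K where K1: "dist (\<Sum>k<K. G k) S < e / 2" and K2: "dist (2 * M * (x ^ K / (1 - x))) 0 < e / 2"
      using eventually_happens'[OF _ eventually_conj[OF ev1 ev2]] by auto
    have nn: "0 \<le> 2 * M * (x ^ K / (1 - x))" using M0 x by auto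
    have "dist (2 * M * (x ^ K / (1 - x))) 0 = 2 * M * (x ^ K / (1 - x))"
      using nn unfolding dist_real_def by (simp only: diff_zero abs_of_nonneg)
    then have K2': "2 * M * (x ^ K / (1 - x)) < e / 2" using K2 by linarith
    show "eventually (\<lambda>Y. dist (sum F Y) S < e) (finite_subsets_at_top UNIV)"
      unfolding eventually_finite_subsets_at_top
    proof (intro exI conjI allI impI)
      show "finite {\<alpha> :: nat ^ 'n. deg \<alpha> < K}"
        by (rule finite_subset[OF _ finite_deg_le[of K]]) auto
      show "{\<alpha> :: nat ^ 'n. deg \<alpha> < K} \<subseteq> UNIV" by simp
      fix Y :: "(nat ^ 'n) set" assume Y: "finite Y \<and> {\<alpha>. deg \<alpha> < K} \<subseteq> Y \<and> Y \<subseteq> UNIV"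
      define X where "X = {\<alpha> :: nat ^ 'n. deg \<alpha> < K}"
      have finX: "finite X" unfolding X_def by (rule finite_subset[OF _ finite_deg_le[of K]]) auto
      have "sum F Y = sum F X + sum F (Y - X)"
        using Y finX unfolding X_def by (metis sum.subset_diff add.commute)
      then have "dist (sum F Y) S = norm ((sum F X - S) + sum F (Y - X))"
        by (simp add: dist_norm algebra_simps)
      also have "\<dots> \<le> norm (sum F X - S) + norm (sum F (Y - X))" by (rule norm_triangle_ineq)
      also have "norm (sum F X - S) < e / 2" using K1 GF[of K] by (simp add: X_def dist_norm)
      also have "norm (sum F (Y - X)) \<le> 2 * M * (x ^ K / (1 - x))"
        using Y by (intro tail) (auto simp: X_def)
      finally show "dist (sum F Y) S < e" using K2' by simp
    qed
  qed
  then show ?thesis unfolding has_sum_def F_def S_def G_def .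
qed

lemma power_mean_pos:
  fixes y :: "'i \<Rightarrow> real"
  assumes S: "finite S" "S \<noteq> {}" and Q: "1 \<le> Q" and y: "\<And>i. i \<in> S \<Longrightarrow> 0 < y i"
  shows "(\<Sum>i\<in>S. y i) \<le> card S powr (1 - 1/Q) * (\<Sum>i\<in>S. y i powr Q) powr (1/Q)"
proof -
  define m where "m = real (card S)"
  have m: "m > 0" using S by (simp add: m_def card_gt_0_iff)
  have "(\<Sum>i\<in>S. (1/m) *\<^sub>R y i) powr Q \<le> (\<Sum>i\<in>S. (1/m) * y i powr Q)"
    by (rule convex_on_sum[OF S powr_convex[OF Q]]) (use m y in \<open>auto simp: m_def\<close>)
  then have A: "((\<Sum>i\<in>S. y i) / m) powr Q \<le> (\<Sum>i\<in>S. y i powr Q) / m"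
    by (simp add: sum_distrib_left[symmetric] sum_divide_distrib[symmetric])
  have A0: "0 \<le> (\<Sum>i\<in>S. y i) / m" using y m by (intro divide_nonneg_pos sum_nonneg) (auto intro: less_imp_le)
  have "(\<Sum>i\<in>S. y i) / m = (((\<Sum>i\<in>S. y i) / m) powr Q) powr (1/Q)"
  proof -
    have s0: "0 \<le> (\<Sum>i\<in>S. y i)" using y by (auto intro: sum_nonneg less_imp_le)
    show ?thesis using s0 m Q by (simp add: powr_powr)
  qed
  also have "\<dots> \<le> ((\<Sum>i\<in>S. y i powr Q) / m) powr (1/Q)"
    using A Q by (intro powr_mono2) auto
  also have "\<dots> = (\<Sum>i\<in>S. y i powr Q) powr (1/Q) / m powr (1/Q)" by (rule powr_divide)
  finally have "(\<Sum>i\<in>S. y i) \<le> m * ((\<Sum>i\<in>S. y i powr Q) powr (1/Q) / m powr (1/Q))"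
    using m by (simp add: field_simps)
  also have "\<dots> = (m / m powr (1/Q)) * (\<Sum>i\<in>S. y i powr Q) powr (1/Q)" by simp
  also have "m / m powr (1/Q) = m powr (1 - 1/Q)" using m by (simp add: powr_diff)
  finally show ?thesis by (simp add: m_def)
qed

lemma power_mean:
  fixes y :: "'i \<Rightarrow> real"
  assumes S: "finite S" and Q: "1 \<le> Q" and y: "\<And>i. i \<in> S \<Longrightarrow> 0 \<le> y i"
  shows "(\<Sum>i\<in>S. y i) \<le> card S powr (1 - 1/Q) * (\<Sum>i\<in>S. y i powr Q) powr (1/Q)"
proof -
  define S' where "S' = {i\<in>S. 0 < y i}"
  have fS': "finite S'" using S by (simp add: S'_def)
  have e1: "(\<Sum>i\<in>S. y i) = (\<Sum>i\<in>S'. y i)"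
    unfolding S'_def using S y by (intro sum.mono_neutral_right) (auto simp: less_le)
  have e2: "(\<Sum>i\<in>S. y i powr Q) = (\<Sum>i\<in>S'. y i powr Q)"
    unfolding S'_def using S y by (intro sum.mono_neutral_right) (auto simp: less_le)
  have nn: "0 \<le> card S powr (1 - 1/Q) * (\<Sum>i\<in>S. y i powr Q) powr (1/Q)" by simp
  show ?thesis
  proof (cases "S' = {}")
    case True then show ?thesis using e1 nn by simp
  next
    case False
    have "(\<Sum>i\<in>S'. y i) \<le> card S' powr (1 - 1/Q) * (\<Sum>i\<in>S'. y i powr Q) powr (1/Q)"
      by (rule power_mean_pos[OF fS' False Q]) (simp add: S'_def)
    also have "\<dots> \<le> card S powr (1 - 1/Q) * (\<Sum>i\<in>S'. y i powr Q) powr (1/Q)"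
    proof (intro mult_right_mono powr_mono2)
      show "real (card S') \<le> real (card S)" using S by (simp add: S'_def card_mono)
      show "0 \<le> 1 - 1/Q" using Q by simp
    qed auto
    finally show ?thesis using e1 e2 by simp
  qed
qed

lemma zero_in_lq_ball: "(0 :: complex ^ 'n::finite) \<in> lq_ball q"
proof (cases "q = \<infinity>")
  case True
  have "range (\<lambda>i. cmod ((0::complex^'n) $ i)) = {0}" by auto
  then show ?thesis using True by (simp add: lq_ball_def lq_norm_def)
next
  case False then show ?thesis by (simp add: lq_ball_def lq_norm_def)
qed

lemma card_pos_univ: "0 < CARD('n::finite)"
  by simp

lemma holder_ball:
  fixes z :: "complex ^ 'n::finite"
  assumes q: "1 \<le> q" and z: "z \<in> lq_ball q"
  shows "real CARD('n) powr (qinv q - 1) * (\<Sum>i\<in>UNIV. cmod (z $ i)) < 1"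
proof (cases "q = \<infinity>")
  case True
  have "Max (range (\<lambda>i. cmod (z $ i))) < 1" using z True by (simp add: lq_ball_def lq_norm_def)
  then have lt: "cmod (z $ i) < 1" for i
    by (meson Max_less_iff UNIV_not_empty finite finite_imageI image_is_empty rangeI)
  have "(\<Sum>i\<in>UNIV. cmod (z $ i)) < (\<Sum>i\<in>(UNIV :: 'n set). 1)"
    by (rule sum_strict_mono) (auto simp: lt)
  then have "(\<Sum>i\<in>UNIV. cmod (z $ i)) < real CARD('n)" by simp
  moreover have Peq: "real CARD('n) powr (qinv q - 1) = 1 / real CARD('n)"
    using True by (simp add: qinv_def powr_minus_divide)
  ultimately have "(\<Sum>i\<in>UNIV. cmod (z $ i)) * (1 / real CARD('n)) < real CARD('n) * (1 / real CARD('n))"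
    by (intro mult_strict_right_mono) auto
  then show ?thesis using Peq by (simp add: mult.commute)
next
  case False
  define Q where "Q = real_of_ereal q"
  have Q: "1 \<le> Q" using q False unfolding Q_def by (cases q) auto
  have qi: "qinv q = 1 / Q" using False by (simp add: qinv_def Q_def)
  define s where "s = (\<Sum>i\<in>UNIV. cmod (z $ i) powr Q)"
  have "s powr (1 / Q) < 1" using z False by (simp add: lq_ball_def lq_norm_def s_def Q_def)
  have sum_le: "(\<Sum>i\<in>UNIV. cmod (z $ i)) \<le> real CARD('n) powr (1 - 1/Q) * s powr (1/Q)"
    unfolding s_def by (rule power_mean) (use Q in auto)
  have "real CARD('n) powr (qinv q - 1) * (\<Sum>i\<in>UNIV. cmod (z $ i))
      \<le> real CARD('n) powr (qinv q - 1) * (real CARD('n) powr (1 - 1/Q) * s powr (1/Q))"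
    by (intro mult_left_mono sum_le) simp
  also have "\<dots> = (real CARD('n) powr (qinv q - 1) * real CARD('n) powr (1 - 1/Q)) * s powr (1/Q)"
    by simp
  also have "real CARD('n) powr (qinv q - 1) * real CARD('n) powr (1 - 1/Q) = 1"
    by (simp add: qi powr_add[symmetric])
  finally show ?thesis using \<open>s powr (1 / Q) < 1\<close> by simp
qed

definition e1 :: "nat \<Rightarrow> nat ^ 1" where "e1 k = (\<chi> _. k)"
definition cv :: "complex \<Rightarrow> complex ^ 1" where "cv w = (\<chi> _. w)"

lemma vec1_eq: "(x :: 'a ^ 1) = (\<chi> _. x $ 1)"
  by (simp add: vec_eq_iff)

lemma zpow_cv: "zpow (cv w) \<beta> = w ^ (\<beta> $ 1)"
  by (simp add: zpow_def cv_def)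

lemma zpow_cv_e1: "zpow (cv w) (e1 k) = w ^ k"
  by (simp add: zpow_cv e1_def)

lemma bij_e1: "bij_betw e1 UNIV UNIV"
  by (rule bij_betwI[of _ _ _ "\<lambda>\<beta>. \<beta> $ 1"]) (auto simp: e1_def vec_eq_iff)

lemma e1_zero: "e1 0 = 0"
  by (simp add: e1_def vec_eq_iff)

lemma cv_disc1: "cv w \<in> disc1 \<longleftrightarrow> cmod w < 1"
  by (simp add: disc1_def cv_def)

lemma summable_e1:
  assumes "H summable_on UNIV" shows "(\<lambda>k. H (e1 k)) summable_on UNIV"
  using assms summable_on_reindex_bij_betw[OF bij_e1, of H] by simp

lemma infsum_e1: "infsum H UNIV = infsum (\<lambda>k. H (e1 k)) UNIV"
  using infsum_reindex_bij_betw[OF bij_e1, of H] by simp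

lemma phf_cv:
  "phf J a b (cv w) = infsum (\<lambda>k. cmul J (w ^ k) (a (e1 k))) UNIV
                      + infsum (\<lambda>k. cmul J (cnj (w ^ k)) (hadj (b (e1 k)))) UNIV"
  unfolding phf_def by (subst (1 2) infsum_e1) (simp add: zpow_cv_e1)

lemma PH_cv_summ:
  assumes "PH J disc1 a b" "cmod w < 1"
  shows "(\<lambda>k. cmul J (w ^ k) (a (e1 k))) summable_on UNIV"
    and "(\<lambda>k. cmul J (cnj (w ^ k)) (hadj (b (e1 k)))) summable_on UNIV"
proof -
  have "cv w \<in> disc1" using assms(2) by (simp add: cv_disc1)
  then have s1: "(\<lambda>\<alpha>. cmul J (zpow (cv w) \<alpha>) (a \<alpha>)) summable_on UNIV"
    and s2: "(\<lambda>\<alpha>. cmul J (cnj (zpow (cv w) \<alpha>)) (hadj (b \<alpha>))) summable_on UNIV"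
    using assms(1) unfolding PH_def by blast+
  show "(\<lambda>k. cmul J (w ^ k) (a (e1 k))) summable_on UNIV"
    using summable_e1[OF s1] by (simp add: zpow_cv_e1)
  show "(\<lambda>k. cmul J (cnj (w ^ k)) (hadj (b (e1 k)))) summable_on UNIV"
    using summable_e1[OF s2] by (simp add: zpow_cv_e1)
qed

lemma PH_coeff_bounds:
  assumes "PH J disc1 a b" "0 \<le> s" "s < 1"
  shows "\<exists>M. \<forall>k. s ^ k * norm (a (e1 k)) \<le> M"
    and "\<exists>M. \<forall>k. s ^ k * norm (hadj (b (e1 k))) \<le> M"
proof -
  have w: "cmod (of_real s) < 1" using assms by simp
  have "(\<lambda>k. s ^ k *\<^sub>R a (e1 k)) summable_on UNIV"
    using PH_cv_summ(1)[OF assms(1) w] by (simp flip: of_real_power)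
  from coeff_bound[OF this] obtain M where "\<forall>k. \<bar>s\<bar> ^ k * norm (a (e1 k)) \<le> M" by blast
  then show "\<exists>M. \<forall>k. s ^ k * norm (a (e1 k)) \<le> M" using assms(2) by auto
  have "(\<lambda>k. s ^ k *\<^sub>R hadj (b (e1 k))) summable_on UNIV"
    using PH_cv_summ(2)[OF assms(1) w] by (simp flip: of_real_power)
  from coeff_bound[OF this] obtain M' where "\<forall>k. \<bar>s\<bar> ^ k * norm (hadj (b (e1 k))) \<le> M'" by blast
  then show "\<exists>M. \<forall>k. s ^ k * norm (hadj (b (e1 k))) \<le> M" using assms(2) by auto
qed

lemma cmod_zpow: "cmod (zpow z \<alpha>) = (\<Prod>i\<in>UNIV. cmod (z $ i) ^ (\<alpha> $ i))"
  by (simp add: zpow_def prod_norm[symmetric] norm_power)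

lemma cmul_scaleR_right': "cmul J c (r *\<^sub>R T) = cmul J (complex_of_real r * c) T"
  by (rule cmul_scaleR_right)

lemma ub_construct:
  fixes J :: "'h::{real_inner,complete_space} \<Rightarrow> 'h" and a b :: "nat ^ 1 \<Rightarrow> ('h \<Rightarrow>\<^sub>L 'h)"
    and q :: ereal and u :: real
  assumes hJ: "cstruct_hilbert J" and PHg: "PH J disc1 a b" and q: "1 \<le> q"
    and u_def: "u = real CARD('n::finite) powr (qinv q - 1)"
    and af_def: "af = (\<lambda>\<alpha>::nat^'n. (real (mult \<alpha>) * u ^ deg \<alpha>) *\<^sub>R a (e1 (deg \<alpha>)))"
    and bf_def: "bf = (\<lambda>\<alpha>::nat^'n. (real (mult \<alpha>) * u ^ deg \<alpha>) *\<^sub>R b (e1 (deg \<alpha>)))"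
  shows "PH J (lq_ball q :: (complex^'n) set) af bf \<and>
         supnorm J (lq_ball q :: (complex^'n) set) af bf \<le> supnorm J disc1 a b"
proof -
  have u0: "u > 0" unfolding u_def by simp
  define L where "L z = complex_of_real u * (\<Sum>i\<in>UNIV. z $ i)" for z :: "complex ^ 'n"
  define \<omega> where "\<omega> z \<alpha> = complex_of_real (real (mult \<alpha>) * u ^ deg \<alpha>) * zpow z \<alpha>"
    for z :: "complex ^ 'n" and \<alpha> :: "nat ^ 'n"
  have key: "((\<lambda>\<alpha>. cmul J (zpow z \<alpha>) (af \<alpha>)) has_sum infsum (\<lambda>k. cmul J ((L z) ^ k) (a (e1 k))) UNIV) UNIV
           \<and> ((\<lambda>\<alpha>. cmul J (cnj (zpow z \<alpha>)) (hadj (bf \<alpha>))) has_sum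
                  infsum (\<lambda>k. cmul J (cnj ((L z) ^ k)) (hadj (b (e1 k)))) UNIV) UNIV
           \<and> cmod (L z) < 1"
    if z: "z \<in> lq_ball q" for z
  proof -
    define t where "t = u * (\<Sum>i\<in>UNIV. cmod (z $ i))"
    have t1: "t < 1" unfolding t_def u_def by (rule holder_ball[OF q z])
    have t0: "0 \<le> t" unfolding t_def using u0 by (simp add: sum_nonneg)
    define t' where "t' = (1 + t) / 2"
    have t': "0 \<le> t'" "t' < 1" "t < t'" using t0 t1 by (auto simp: t'_def)
    obtain MA where MA: "\<And>k. t' ^ k * norm (a (e1 k)) \<le> MA"
      using PH_coeff_bounds(1)[OF PHg t'(1,2)] by blast
    obtain MB where MB: "\<And>k. t' ^ k * norm (hadj (b (e1 k))) \<le> MB"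
      using PH_coeff_bounds(2)[OF PHg t'(1,2)] by blast
    have Lz: "cmod (L z) \<le> t"
    proof -
      have "cmod (L z) = u * cmod (\<Sum>i\<in>UNIV. z $ i)" using u0 by (simp add: L_def norm_mult)
      also have "\<dots> \<le> u * (\<Sum>i\<in>UNIV. cmod (z $ i))" using u0 by (intro mult_left_mono norm_sum) auto
      finally show ?thesis by (simp add: t_def)
    qed
    then have Lz1: "cmod (L z) < 1" using t1 by linarith
    have om_abs: "(\<Sum>\<alpha>\<in>Dk k. cmod (\<omega> z \<alpha>)) = t ^ k" for k
    proof -
      have "(\<Sum>\<alpha>\<in>Dk k. cmod (\<omega> z \<alpha>)) = (\<Sum>\<alpha>\<in>Dk k. u ^ k * (real (mult \<alpha>) * (\<Prod>i\<in>UNIV. cmod (z $ i) ^ (\<alpha> $ i))))"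
        by (intro sum.cong refl) (use u0 in \<open>simp add: \<omega>_def norm_mult norm_power cmod_zpow Dk_def\<close>)
      also have "\<dots> = u ^ k * (\<Sum>i\<in>UNIV. cmod (z $ i)) ^ k"
        by (simp add: multinomial sum_distrib_left)
      also have "\<dots> = t ^ k" by (simp add: t_def power_mult_distrib)
      finally show ?thesis .
    qed
    have om_sum: "(\<Sum>\<alpha>\<in>Dk k. \<omega> z \<alpha>) = (L z) ^ k" for k
    proof -
      have "(\<Sum>\<alpha>\<in>Dk k. \<omega> z \<alpha>) = (\<Sum>\<alpha>\<in>Dk k. complex_of_real u ^ k * (of_nat (mult \<alpha>) * (\<Prod>i\<in>UNIV. (z $ i) ^ (\<alpha> $ i))))"
        by (intro sum.cong refl) (simp add: \<omega>_def zpow_def Dk_def)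
      also have "\<dots> = complex_of_real u ^ k * (\<Sum>i\<in>UNIV. z $ i) ^ k"
        by (simp add: multinomial sum_distrib_left)
      also have "\<dots> = (L z) ^ k" by (simp add: L_def power_mult_distrib)
      finally show ?thesis .
    qed
    have om_abs': "(\<Sum>\<alpha>\<in>Dk k. cmod (cnj (\<omega> z \<alpha>))) \<le> t ^ k" for k
      using om_abs[of k] by simp
    have om_sum': "(\<Sum>\<alpha>\<in>Dk k. cnj (\<omega> z \<alpha>)) = cnj ((L z) ^ k)" for k
      using om_sum[of k] by (simp flip: cnj_sum)
    have sA: "(\<lambda>k. cmul J (\<Sum>\<alpha>\<in>Dk k. \<omega> z \<alpha>) (a (e1 k))) summable_on UNIV"
      using PH_cv_summ(1)[OF PHg Lz1] by (simp add: om_sum)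
    have sB: "(\<lambda>k. cmul J (\<Sum>\<alpha>\<in>Dk k. cnj (\<omega> z \<alpha>)) (hadj (b (e1 k)))) summable_on UNIV"
      using PH_cv_summ(2)[OF PHg Lz1] by (simp add: om_sum')
    have hA: "((\<lambda>\<alpha>. cmul J (\<omega> z \<alpha>) (a (e1 (deg \<alpha>)))) has_sum
               infsum (\<lambda>k. cmul J (\<Sum>\<alpha>\<in>Dk k. \<omega> z \<alpha>) (a (e1 k))) UNIV) UNIV"
      by (rule series_regroup[OF hJ MA t0 t'(3)]) (use om_abs sA in auto)
    have hB: "((\<lambda>\<alpha>. cmul J (cnj (\<omega> z \<alpha>)) (hadj (b (e1 (deg \<alpha>))))) has_sum
               infsum (\<lambda>k. cmul J (\<Sum>\<alpha>\<in>Dk k. cnj (\<omega> z \<alpha>)) (hadj (b (e1 k)))) UNIV) UNIV"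
      by (rule series_regroup[OF hJ MB t0 t'(3)]) (use om_abs' sB in auto)
    have eA: "cmul J (zpow z \<alpha>) (af \<alpha>) = cmul J (\<omega> z \<alpha>) (a (e1 (deg \<alpha>)))" for \<alpha>
      by (simp add: af_def \<omega>_def cmul_scaleR_right)
    have eB: "cmul J (cnj (zpow z \<alpha>)) (hadj (bf \<alpha>)) = cmul J (cnj (\<omega> z \<alpha>)) (hadj (b (e1 (deg \<alpha>))))" for \<alpha>
      by (simp add: bf_def \<omega>_def cmul_scaleR_right hadj_scaleR)
    show ?thesis using hA hB Lz1 by (simp add: eA eB om_sum om_sum')
  qed
  have phf_eq: "phf J af bf z = phf J a b (cv (L z))" if "z \<in> lq_ball q" for z
  proof -
    have h1: "((\<lambda>\<alpha>. cmul J (zpow z \<alpha>) (af \<alpha>)) has_sum infsum (\<lambda>k. cmul J ((L z) ^ k) (a (e1 k))) UNIV) UNIV"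
      and h2: "((\<lambda>\<alpha>. cmul J (cnj (zpow z \<alpha>)) (hadj (bf \<alpha>))) has_sum
                  infsum (\<lambda>k. cmul J (cnj ((L z) ^ k)) (hadj (b (e1 k)))) UNIV) UNIV"
      using key[OF that] by blast+
    show ?thesis unfolding phf_def[of J af bf] phf_cv using infsumI[OF h1] infsumI[OF h2] by simp
  qed
  have in_disc: "cv (L z) \<in> disc1" if "z \<in> lq_ball q" for z
    using key[OF that] by (simp add: cv_disc1)
  have img: "phf J af bf ` lq_ball q \<subseteq> phf J a b ` disc1"
    using phf_eq in_disc by auto
  have BHa: "a \<beta> \<in> BH J" "b \<beta> \<in> BH J" for \<beta> using PHg unfolding PH_def by auto
  have PHf: "PH J (lq_ball q :: (complex^'n) set) af bf"
    unfolding PH_def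
  proof (intro conjI ballI allI)
    fix \<alpha> show "af \<alpha> \<in> BH J" "bf \<alpha> \<in> BH J"
      unfolding af_def bf_def by (intro BH_scaleR[OF hJ] BHa)+
  next
    show "bf 0 = 0" using PHg by (simp add: bf_def deg_def e1_zero PH_def)
  next
    fix z :: "complex ^ 'n" assume z: "z \<in> lq_ball q"
    show "(\<lambda>\<alpha>. cmul J (zpow z \<alpha>) (af \<alpha>)) summable_on UNIV"
      using key[OF z] summable_on_def by blast
    show "(\<lambda>\<alpha>. cmul J (cnj (zpow z \<alpha>)) (hadj (bf \<alpha>))) summable_on UNIV"
      using key[OF z] summable_on_def by blast
  next
    show "bounded (phf J af bf ` lq_ball q)"
      using PHg img unfolding PH_def by (meson bounded_subset)
  qed
  have "supnorm J (lq_ball q :: (complex^'n) set) af bf \<le> supnorm J disc1 a b"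
    unfolding supnorm_def[of J "lq_ball q"]
  proof (rule cSUP_least)
    show "(lq_ball q :: (complex^'n) set) \<noteq> {}" using zero_in_lq_ball by blast
    fix z :: "complex ^ 'n" assume z: "z \<in> lq_ball q"
    show "norm (phf J af bf z) \<le> supnorm J disc1 a b"
      using supnorm_ge[OF PHg in_disc[OF z]] phf_eq[OF z] by simp
  qed
  with PHf show ?thesis by blast
qed

lemma ennreal_sum_le_infsum:
  fixes f :: "'a \<Rightarrow> ennreal"
  assumes "finite B" "B \<subseteq> A" shows "sum f B \<le> infsum f A"
proof -
  have "infsum f A = (SUP F\<in>{F. finite F \<and> F \<subseteq> A}. sum f F)" by (rule nonneg_infsum_complete) simp
  moreover have "sum f B \<le> (SUP F\<in>{F. finite F \<and> F \<subseteq> A}. sum f F)"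
    using assms by (intro SUP_upper) auto
  ultimately show ?thesis by simp
qed

lemma ennreal_infsum_le_finite:
  fixes f :: "'a \<Rightarrow> ennreal"
  assumes "\<And>F. finite F \<Longrightarrow> F \<subseteq> A \<Longrightarrow> sum f F \<le> X" shows "infsum f A \<le> X"
proof -
  have "infsum f A = (SUP F\<in>{F. finite F \<and> F \<subseteq> A}. sum f F)" by (rule nonneg_infsum_complete) simp
  also have "\<dots> \<le> X" using assms by (intro SUP_least) auto
  finally show ?thesis .
qed

lemma powr_pow_swap: "0 \<le> (x::real) \<Longrightarrow> (x ^ n) powr p = (x powr p) ^ n"
proof (induction n)
  case 0 then show ?case by simp
next
  case (Suc n) then show ?case by (simp add: powr_mult)
qed

lemma nat_le_powr: "1 \<le> p \<Longrightarrow> real m \<le> real m powr p"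
proof (cases "m = 0")
  case False
  assume p: "1 \<le> p"
  have "real m = real m powr 1" using False by simp
  also have "\<dots> \<le> real m powr p" using False p by (intro powr_mono) auto
  finally show ?thesis .
qed simp

lemma rpow_powr:
  assumes "\<And>i. 0 \<le> r $ i"
  shows "rpow r \<alpha> powr p = (\<Prod>i\<in>UNIV. (r $ i powr p) ^ (\<alpha> $ i))"
  unfolding rpow_def prod_powr_distrib using assms by (simp add: powr_pow_swap)

lemma ub_block:
  fixes J :: "'h::{real_inner,complete_space} \<Rightarrow> 'h" and U :: "('h \<Rightarrow>\<^sub>L 'h) \<Rightarrow> 'y::real_normed_vector"
  assumes hU: "cbounded_linear_on J JY U" and A: "A \<in> BH J" and B: "B \<in> BH J"
    and p: "1 \<le> p" and u0: "0 < u" and r0: "\<And>i. 0 \<le> r $ i"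
    and \<rho>: "\<rho> = u * (\<Sum>i\<in>UNIV. r $ i powr p) powr (1/p)"
  shows "(norm (U A) powr p + norm (U B) powr p) * (\<rho> ^ k) powr p
     \<le> (\<Sum>\<alpha>\<in>Dk k. (norm (U ((real (mult \<alpha>) * u ^ deg \<alpha>) *\<^sub>R A)) powr p
                       + norm (U ((real (mult \<alpha>) * u ^ deg \<alpha>) *\<^sub>R B)) powr p) * rpow (r :: real ^ 'n::finite) \<alpha> powr p)"
proof -
  define c where "c = norm (U A) powr p + norm (U B) powr p"
  have c0: "0 \<le> c" by (simp add: c_def)
  define s where "s = (\<Sum>i\<in>UNIV. r $ i powr p)"
  have s0: "0 \<le> s" by (simp add: s_def sum_nonneg)
  have \<rho>0: "0 \<le> \<rho>" using u0 by (simp add: \<rho>)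
  have \<rho>p: "\<rho> powr p = u powr p * s"
    using u0 s0 p by (simp add: \<rho> s_def[symmetric] powr_mult powr_powr)
  have "(\<rho> ^ k) powr p = (u powr p * s) ^ k" using \<rho>0 by (simp add: powr_pow_swap \<rho>p)
  also have "\<dots> = (\<Sum>i\<in>UNIV. u powr p * r $ i powr p) ^ k" by (simp add: s_def sum_distrib_left)
  also have "\<dots> = (\<Sum>\<alpha>\<in>Dk k. real (mult \<alpha>) * (\<Prod>i\<in>UNIV. (u powr p * r $ i powr p) ^ (\<alpha> $ i)))"
    by (rule multinomial)
  finally have e1: "(\<rho> ^ k) powr p = (\<Sum>\<alpha>\<in>Dk k. real (mult \<alpha>) * (\<Prod>i\<in>UNIV. (u powr p * r $ i powr p) ^ (\<alpha> $ i)))" .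
  have trm: "c * (real (mult \<alpha>) * (\<Prod>i\<in>UNIV. (u powr p * r $ i powr p) ^ (\<alpha> $ i)))
      \<le> (norm (U ((real (mult \<alpha>) * u ^ deg \<alpha>) *\<^sub>R A)) powr p
          + norm (U ((real (mult \<alpha>) * u ^ deg \<alpha>) *\<^sub>R B)) powr p) * rpow r \<alpha> powr p"
    if "\<alpha> \<in> Dk k" for \<alpha>
  proof -
    define d where "d = real (mult \<alpha>) * u ^ deg \<alpha>"
    have d0: "0 \<le> d" using u0 by (simp add: d_def)
    define m where "m = real (mult \<alpha>)"
    define W where "W = (u powr p) ^ deg \<alpha>"
    define R where "R = rpow r \<alpha> powr p"
    have W0: "0 \<le> W" and R0: "0 \<le> R" by (simp_all add: W_def R_def)
    have E1: "norm (U (d *\<^sub>R A)) powr p + norm (U (d *\<^sub>R B)) powr p = d powr p * c"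
      using d0 by (simp add: U_norm_scaleR[OF hU A] U_norm_scaleR[OF hU B] powr_mult c_def algebra_simps)
    have E2: "d powr p = m powr p * W"
      using u0 by (simp add: d_def m_def W_def powr_mult powr_pow_swap)
    have E3: "(\<Prod>i\<in>UNIV. (u powr p * r $ i powr p) ^ (\<alpha> $ i)) = W * R"
      by (simp add: W_def R_def rpow_powr[OF r0] power_mult_distrib prod.distrib deg_def power_sum)
    have mp: "m \<le> m powr p" unfolding m_def using p by (rule nat_le_powr)
    have "c * (m * (W * R)) \<le> c * (m powr p * (W * R))"
      using c0 W0 R0 mp by (intro mult_left_mono mult_right_mono) auto
    also have "\<dots> = (norm (U (d *\<^sub>R A)) powr p + norm (U (d *\<^sub>R B)) powr p) * R"
      by (simp add: E1 E2 algebra_simps)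
    finally show ?thesis unfolding E3 m_def[symmetric] R_def[symmetric] d_def[folded m_def, symmetric] .
  qed
  have S: "(\<Sum>\<alpha>\<in>Dk k. c * (real (mult \<alpha>) * (\<Prod>i\<in>UNIV. (u powr p * r $ i powr p) ^ (\<alpha> $ i))))
      \<le> (\<Sum>\<alpha>\<in>Dk k. (norm (U ((real (mult \<alpha>) * u ^ deg \<alpha>) *\<^sub>R A)) powr p
                       + norm (U ((real (mult \<alpha>) * u ^ deg \<alpha>) *\<^sub>R B)) powr p) * rpow r \<alpha> powr p)"
    by (rule sum_mono) (rule trm)
  have "c * (\<rho> ^ k) powr p = (\<Sum>\<alpha>\<in>Dk k. c * (real (mult \<alpha>) * (\<Prod>i\<in>UNIV. (u powr p * r $ i powr p) ^ (\<alpha> $ i))))"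
    by (simp add: e1 sum_distrib_left)
  with S show ?thesis by (simp add: c_def)
qed

lemma zpow_1: "zpow (z :: complex ^ 1) \<beta> = (z $ 1) ^ (\<beta> $ 1)"
  by (simp add: zpow_def)

lemma ub_sum_ineq:
  fixes J :: "'h::{real_inner,complete_space} \<Rightarrow> 'h" and U :: "('h \<Rightarrow>\<^sub>L 'h) \<Rightarrow> 'y::real_normed_vector"
    and a b :: "nat ^ 1 \<Rightarrow> ('h \<Rightarrow>\<^sub>L 'h)" and r :: "real ^ 'n::finite"
  assumes hU: "cbounded_linear_on J JY U" and BHa: "\<And>\<beta>. a \<beta> \<in> BH J" and BHb: "\<And>\<beta>. b \<beta> \<in> BH J"
    and p: "1 \<le> p" and u0: "0 < u" and r0: "\<And>i. 0 \<le> r $ i"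
    and \<rho>: "\<rho> = u * (\<Sum>i\<in>UNIV. r $ i powr p) powr (1/p)"
    and af_def: "af = (\<lambda>\<alpha>::nat^'n. (real (mult \<alpha>) * u ^ deg \<alpha>) *\<^sub>R a (e1 (deg \<alpha>)))"
    and bf_def: "bf = (\<lambda>\<alpha>::nat^'n. (real (mult \<alpha>) * u ^ deg \<alpha>) *\<^sub>R b (e1 (deg \<alpha>)))"
  shows "(SUP z\<in>(\<lambda>w. \<rho> *\<^sub>R w) ` disc1. infsum (\<lambda>\<beta>. ennreal ((norm (U (a \<beta>)) powr p + norm (U (b \<beta>)) powr p)
              * norm (zpow z \<beta>) powr p)) UNIV)
     \<le> infsum (\<lambda>\<alpha>. ennreal ((norm (U (af \<alpha>)) powr p + norm (U (bf \<alpha>)) powr p) * rpow r \<alpha> powr p)) UNIV"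
proof -
  define c where "c \<beta> = norm (U (a \<beta>)) powr p + norm (U (b \<beta>)) powr p" for \<beta>
  have c0: "0 \<le> c \<beta>" for \<beta> by (simp add: c_def)
  define RF where "RF \<alpha> = (norm (U (af \<alpha>)) powr p + norm (U (bf \<alpha>)) powr p) * rpow r \<alpha> powr p" for \<alpha>
  have RF0: "0 \<le> RF \<alpha>" for \<alpha> by (simp add: RF_def)
  have \<rho>0: "0 \<le> \<rho>" using u0 by (simp add: \<rho>)
  have step1: "infsum (\<lambda>\<beta>. ennreal (c \<beta> * norm (zpow z \<beta>) powr p)) UNIV
      \<le> infsum (\<lambda>\<beta>. ennreal (c \<beta> * (\<rho> ^ (\<beta> $ 1)) powr p)) UNIV" if zin: "z \<in> (\<lambda>w. \<rho> *\<^sub>R w) ` disc1" for z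
  proof (rule infsum_mono)
    fix \<beta> :: "nat ^ 1"
    obtain w where w: "w \<in> disc1" "z = \<rho> *\<^sub>R w" using zin by blast
    have "cmod (z $ 1) = \<rho> * cmod (w $ 1)" using w \<rho>0 by (simp add: norm_scaleR)
    also have "\<dots> \<le> \<rho>" using w \<rho>0 by (simp add: disc1_def mult_left_le)
    finally have "norm (zpow z \<beta>) \<le> \<rho> ^ (\<beta> $ 1)" by (simp add: zpow_1 norm_power power_mono)
    then have "norm (zpow z \<beta>) powr p \<le> (\<rho> ^ (\<beta> $ 1)) powr p" using p by (intro powr_mono2) auto
    then show "ennreal (c \<beta> * norm (zpow z \<beta>) powr p) \<le> ennreal (c \<beta> * (\<rho> ^ (\<beta> $ 1)) powr p)"
      by (intro ennreal_leI mult_left_mono c0)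
  qed (rule nonneg_summable_on_complete, simp)+
  have step2: "infsum (\<lambda>\<beta>. ennreal (c \<beta> * (\<rho> ^ (\<beta> $ 1)) powr p)) UNIV
      = infsum (\<lambda>k. ennreal (c (e1 k) * (\<rho> ^ k) powr p)) UNIV"
    by (subst infsum_e1) (simp add: e1_def)
  have blockk: "c (e1 k) * (\<rho> ^ k) powr p \<le> (\<Sum>\<alpha>\<in>Dk k. RF \<alpha>)" for k
  proof -
    have "c (e1 k) * (\<rho> ^ k) powr p \<le> (\<Sum>\<alpha>\<in>Dk k. (norm (U ((real (mult \<alpha>) * u ^ deg \<alpha>) *\<^sub>R a (e1 k))) powr p
                       + norm (U ((real (mult \<alpha>) * u ^ deg \<alpha>) *\<^sub>R b (e1 k))) powr p) * rpow r \<alpha> powr p)"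
      unfolding c_def by (rule ub_block[OF hU BHa BHb p u0 r0 \<rho>])
    also have "\<dots> = (\<Sum>\<alpha>\<in>Dk k. RF \<alpha>)"
      by (intro sum.cong refl) (simp add: RF_def af_def bf_def Dk_def)
    finally show ?thesis .
  qed
  have step3: "infsum (\<lambda>k. ennreal (c (e1 k) * (\<rho> ^ k) powr p)) UNIV \<le> infsum (\<lambda>\<alpha>. ennreal (RF \<alpha>)) UNIV"
  proof (rule ennreal_infsum_le_finite)
    fix F :: "nat set" assume F: "finite F"
    define K where "K = (\<Sum>k\<in>F. k)"
    have FK: "F \<subseteq> {..K}" using F unfolding K_def by (auto intro: member_le_sum)
    have "(\<Sum>k\<in>F. ennreal (c (e1 k) * (\<rho> ^ k) powr p)) \<le> (\<Sum>k\<in>{..K}. ennreal (c (e1 k) * (\<rho> ^ k) powr p))"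
      using FK by (intro sum_mono2) auto
    also have "\<dots> = ennreal (\<Sum>k\<le>K. c (e1 k) * (\<rho> ^ k) powr p)" using c0 by (simp add: sum_ennreal)
    also have "\<dots> \<le> ennreal (\<Sum>k\<le>K. \<Sum>\<alpha>\<in>Dk k. RF \<alpha>)" by (intro ennreal_leI sum_mono blockk)
    also have "(\<Sum>k\<le>K. \<Sum>\<alpha>\<in>Dk k. RF \<alpha>) = (\<Sum>\<alpha>\<in>{\<alpha>. deg \<alpha> \<le> K}. RF \<alpha>)" by (rule sum_by_deg[symmetric])
    also have "ennreal \<dots> = (\<Sum>\<alpha>\<in>{\<alpha>. deg \<alpha> \<le> K}. ennreal (RF \<alpha>))" using RF0 by (simp add: sum_ennreal)
    also have "\<dots> \<le> infsum (\<lambda>\<alpha>. ennreal (RF \<alpha>)) UNIV" by (rule ennreal_sum_le_infsum) (auto simp: finite_deg_le)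
    finally show "(\<Sum>k\<in>F. ennreal (c (e1 k) * (\<rho> ^ k) powr p)) \<le> infsum (\<lambda>\<alpha>. ennreal (RF \<alpha>)) UNIV" .
  qed
  have "(SUP z\<in>(\<lambda>w. \<rho> *\<^sub>R w) ` disc1. infsum (\<lambda>\<beta>. ennreal (c \<beta> * norm (zpow z \<beta>) powr p)) UNIV)
      \<le> infsum (\<lambda>\<alpha>. ennreal (RF \<alpha>)) UNIV"
  proof (rule SUP_least)
    fix z assume "z \<in> (\<lambda>w. \<rho> *\<^sub>R w) ` disc1"
    from step1[OF this] step2 step3
    show "infsum (\<lambda>\<beta>. ennreal (c \<beta> * norm (zpow z \<beta>) powr p)) UNIV \<le> infsum (\<lambda>\<alpha>. ennreal (RF \<alpha>)) UNIV"
      by simp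
  qed
  then show ?thesis by (simp add: c_def RF_def)
qed

lemma avg_le:
  fixes r :: "real ^ 'n::finite"
  assumes p: "1 \<le> p" and r0: "\<And>i. 0 \<le> r $ i"
  shows "(\<Sum>i\<in>UNIV. r $ i) / real CARD('n) * real CARD('n) powr (1/p + qinv q - 1)
       \<le> real CARD('n) powr (qinv q - 1) * (\<Sum>i\<in>UNIV. r $ i powr p) powr (1/p)"
proof -
  define N where "N = real CARD('n)"
  have N: "N > 0" by (simp add: N_def)
  define S where "S = (\<Sum>i\<in>UNIV. r $ i powr p) powr (1/p)"
  have S0: "0 \<le> S" by (simp add: S_def)
  have pm: "(\<Sum>i\<in>UNIV. r $ i) \<le> N powr (1 - 1/p) * S"
    unfolding N_def S_def by (rule power_mean) (use p r0 in auto)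
  have "(\<Sum>i\<in>UNIV. r $ i) / N * N powr (1/p + qinv q - 1) = (\<Sum>i\<in>UNIV. r $ i) * N powr (1/p + qinv q - 2)"
    using N by (simp add: powr_diff power2_eq_square)
  also have "\<dots> \<le> (N powr (1 - 1/p) * S) * N powr (1/p + qinv q - 2)"
    using pm by (intro mult_right_mono) auto
  also have "\<dots> = S * (N powr (1 - 1/p) * N powr (1/p + qinv q - 2))" by simp
  also have "N powr (1 - 1/p) * N powr (1/p + qinv q - 2) = N powr (qinv q - 1)"
    by (simp add: powr_add[symmetric])
  finally show ?thesis by (simp add: N_def S_def mult.commute)
qed

definition emb :: "'n::finite \<Rightarrow> nat ^ 1 \<Rightarrow> nat ^ 'n" where
  "emb io \<beta> = (\<chi> i. if i = io then \<beta> $ 1 else 0)"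

definition zv :: "'n::finite \<Rightarrow> complex ^ 1 \<Rightarrow> complex ^ 'n" where
  "zv io w = (\<chi> i. if i = io then w $ 1 else 0)"

definition onaxis :: "'n::finite \<Rightarrow> nat ^ 'n \<Rightarrow> bool" where
  "onaxis io \<alpha> \<longleftrightarrow> (\<forall>i. i \<noteq> io \<longrightarrow> \<alpha> $ i = 0)"

lemma prod_axis:
  fixes x :: "'a::comm_ring_1" and io :: "'n::finite"
  shows "(\<Prod>i\<in>UNIV. (if i = io then x else 0) ^ (\<alpha> $ i)) = (if onaxis io \<alpha> then x ^ (\<alpha> $ io) else 0)"
proof (cases "onaxis io \<alpha>")
  case True
  have "(\<Prod>i\<in>UNIV. (if i = io then x else 0) ^ (\<alpha> $ i)) = (\<Prod>i\<in>UNIV. if i = io then x ^ (\<alpha> $ io) else 1)"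
    using True by (intro prod.cong refl) (auto simp: onaxis_def)
  also have "\<dots> = x ^ (\<alpha> $ io)" by simp
  finally show ?thesis using True by simp
next
  case False
  then obtain j where j: "j \<noteq> io" "\<alpha> $ j \<noteq> 0" by (auto simp: onaxis_def)
  have "(\<Prod>i\<in>UNIV. (if i = io then x else 0) ^ (\<alpha> $ i)) = 0"
    using j by (intro prod_zero) (auto intro!: exI[of _ j] simp: zero_power)
  then show ?thesis using False by simp
qed

lemma zpow_zv: "zpow (zv io w) \<alpha> = (if onaxis io \<alpha> then (w $ 1) ^ (\<alpha> $ io) else 0)"
  unfolding zpow_def zv_def using prod_axis[of io "w $ 1" \<alpha>] by (simp add: if_distrib cong: if_cong)

lemma rpow_axis: "rpow (\<chi> i. if i = io then t else 0) \<alpha> = (if onaxis io \<alpha> then t ^ (\<alpha> $ io) else 0)"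
  unfolding rpow_def using prod_axis[of io t \<alpha>] by simp

lemma emb_onaxis: "onaxis io (emb io \<beta>)"
  by (simp add: onaxis_def emb_def)

lemma emb_i0: "emb io \<beta> $ io = \<beta> $ 1"
  by (simp add: emb_def)

lemma range_emb: "range (emb io) = {\<alpha>. onaxis io \<alpha>}"
proof (intro equalityI subsetI)
  fix \<alpha> assume "\<alpha> \<in> {\<alpha>. onaxis io \<alpha>}"
  then have "\<alpha> = emb io (\<chi> _. \<alpha> $ io)" by (auto simp: emb_def onaxis_def vec_eq_iff)
  then show "\<alpha> \<in> range (emb io)" by blast
qed (auto simp: emb_onaxis)

lemma inj_emb: "inj (emb io)"
proof (rule injI)
  fix x y assume "emb io x = emb io y"
  then have "x $ 1 = y $ 1" by (metis emb_i0)
  then show "x = y" by (simp add: vec_eq_iff)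
qed

lemma emb_zero: "emb io 0 = 0"
  by (simp add: emb_def vec_eq_iff)

lemma axis_summable:
  fixes F :: "nat ^ 'n::finite \<Rightarrow> 'b::{comm_monoid_add, topological_space}"
  assumes "\<And>\<alpha>. \<not> onaxis io \<alpha> \<Longrightarrow> F \<alpha> = 0" "F summable_on UNIV"
  shows "(\<lambda>\<beta>. F (emb io \<beta>)) summable_on UNIV"
proof -
  have "F summable_on range (emb io)"
    using assms(2) summable_on_cong_neutral[where S=UNIV and T="range (emb io)" and f=F and g=F] assms(1)
    by (auto simp: range_emb)
  then show ?thesis using summable_on_reindex[OF inj_emb[of io], where g=F] by (simp add: comp_def)
qed

lemma axis_infsum:
  fixes F :: "nat ^ 'n::finite \<Rightarrow> 'b::{comm_monoid_add, t2_space}"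
  assumes "\<And>\<alpha>. \<not> onaxis io \<alpha> \<Longrightarrow> F \<alpha> = 0"
  shows "infsum F UNIV = infsum (\<lambda>\<beta>. F (emb io \<beta>)) UNIV"
proof -
  have "infsum F UNIV = infsum F (range (emb io))"
    using assms by (intro infsum_cong_neutral) (auto simp: range_emb)
  also have "\<dots> = infsum (\<lambda>\<beta>. F (emb io \<beta>)) UNIV" using infsum_reindex[OF inj_emb[of io], where g=F] by (simp add: comp_def)
  finally show ?thesis .
qed

lemma lq_norm_zv: "lq_norm q (zv io w) = cmod (w $ 1)" if q: "1 \<le> q"
proof (cases "q = \<infinity>")
  case True
  have "Max (range (\<lambda>i. cmod (zv io w $ i))) = cmod (w $ 1)"
    by (rule Max_eqI) (auto simp: zv_def intro!: image_eqI[of _ _ io])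
  then show ?thesis using True by (simp add: lq_norm_def)
next
  case False
  define Q where "Q = real_of_ereal q"
  have Q: "1 \<le> Q" using q False unfolding Q_def by (cases q) auto
  have "(\<Sum>i\<in>UNIV. cmod (zv io w $ i) powr Q) = (\<Sum>i\<in>UNIV. if i = io then cmod (w $ 1) powr Q else 0)"
    by (intro sum.cong refl) (auto simp: zv_def)
  also have "\<dots> = cmod (w $ 1) powr Q" by simp
  finally have "lq_norm q (zv io w) = (cmod (w $ 1) powr Q) powr (1 / Q)"
    using False by (simp add: lq_norm_def Q_def)
  also have "\<dots> = cmod (w $ 1)" using Q by (simp add: powr_powr)
  finally show ?thesis .
qed

lemma zv_in_ball: "1 \<le> q \<Longrightarrow> w \<in> disc1 \<Longrightarrow> zv io w \<in> lq_ball q"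
  by (simp add: lq_ball_def lq_norm_zv disc1_def)

lemma zpow_zv_emb: "zpow (zv io w) (emb io \<beta>) = zpow w \<beta>"
  by (simp add: zpow_zv emb_onaxis emb_i0 zpow_1)

lemma lb_construct:
  fixes J :: "'h::{real_inner,complete_space} \<Rightarrow> 'h" and a b :: "nat ^ 'n::finite \<Rightarrow> ('h \<Rightarrow>\<^sub>L 'h)"
  assumes PHf: "PH J (lq_ball q :: (complex^'n) set) a b" and q: "1 \<le> q"
  shows "PH J disc1 (\<lambda>\<beta>. a (emb io \<beta>)) (\<lambda>\<beta>. b (emb io \<beta>)) \<and>
         supnorm J disc1 (\<lambda>\<beta>. a (emb io \<beta>)) (\<lambda>\<beta>. b (emb io \<beta>)) \<le> supnorm J (lq_ball q :: (complex^'n) set) a b"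
proof -
  define ag where "ag \<beta> = a (emb io \<beta>)" for \<beta>
  define bg where "bg \<beta> = b (emb io \<beta>)" for \<beta>
  have offA: "cmul J (zpow (zv io w) \<alpha>) (a \<alpha>) = 0" if "\<not> onaxis io \<alpha>" for w \<alpha>
    using that by (simp add: zpow_zv)
  have offB: "cmul J (cnj (zpow (zv io w) \<alpha>)) (hadj (b \<alpha>)) = 0" if "\<not> onaxis io \<alpha>" for w \<alpha>
    using that by (simp add: zpow_zv)
  have phf_eq: "phf J ag bg w = phf J a b (zv io w)" for w
    unfolding phf_def ag_def bg_def
    by (subst (1 2) axis_infsum[of io]) (use offA offB in \<open>auto simp: zpow_zv_emb\<close>)
  have PHg: "PH J disc1 ag bg"
    unfolding PH_def
  proof (intro conjI ballI allI)
    fix \<beta> show "ag \<beta> \<in> BH J" "bg \<beta> \<in> BH J" using PHf by (auto simp: PH_def ag_def bg_def)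
  next
    show "bg 0 = 0" using PHf by (simp add: PH_def bg_def emb_zero)
  next
    fix w assume w: "w \<in> disc1"
    have zin: "zv io w \<in> lq_ball q" by (rule zv_in_ball[OF q w])
    have s1: "(\<lambda>\<alpha>. cmul J (zpow (zv io w) \<alpha>) (a \<alpha>)) summable_on UNIV"
      and s2: "(\<lambda>\<alpha>. cmul J (cnj (zpow (zv io w) \<alpha>)) (hadj (b \<alpha>))) summable_on UNIV"
      using PHf zin unfolding PH_def by blast+
    show "(\<lambda>\<beta>. cmul J (zpow w \<beta>) (ag \<beta>)) summable_on UNIV"
      using axis_summable[where io=io and F="\<lambda>\<alpha>. cmul J (zpow (zv io w) \<alpha>) (a \<alpha>)"] offA s1
      by (simp add: zpow_zv_emb ag_def)
    show "(\<lambda>\<beta>. cmul J (cnj (zpow w \<beta>)) (hadj (bg \<beta>))) summable_on UNIV"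
      using axis_summable[where io=io and F="\<lambda>\<alpha>. cmul J (cnj (zpow (zv io w) \<alpha>)) (hadj (b \<alpha>))"] offB s2
      by (simp add: zpow_zv_emb bg_def)
  next
    have "phf J ag bg ` disc1 \<subseteq> phf J a b ` lq_ball q"
      using phf_eq zv_in_ball[OF q] by auto
    then show "bounded (phf J ag bg ` disc1)" using PHf unfolding PH_def by (meson bounded_subset)
  qed
  have "supnorm J disc1 ag bg \<le> supnorm J (lq_ball q :: (complex^'n) set) a b"
    unfolding supnorm_def[of J disc1]
  proof (rule cSUP_least)
    show "disc1 \<noteq> {}" by (auto simp: disc1_def intro!: exI[of _ 0])
    fix w assume w: "w \<in> disc1"
    show "norm (phf J ag bg w) \<le> supnorm J (lq_ball q) a b"
      using supnorm_ge[OF PHf zv_in_ball[OF q w]] phf_eq[of w] by simp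
  qed
  with PHg show ?thesis by (simp add: ag_def[abs_def] bg_def[abs_def])
qed

lemma lb_sum_eq:
  fixes cf :: "nat ^ 'n::finite \<Rightarrow> real"
  assumes t: "0 \<le> t" and p: "1 \<le> p"
  shows "infsum (\<lambda>\<alpha>. ennreal (cf \<alpha> * rpow (\<chi> i. if i = io then t else 0) \<alpha> powr p)) UNIV
       = infsum (\<lambda>\<beta>. ennreal (cf (emb io \<beta>) * norm (zpow (cv (complex_of_real t)) \<beta>) powr p)) UNIV"
proof -
  have "infsum (\<lambda>\<alpha>. ennreal (cf \<alpha> * rpow (\<chi> i. if i = io then t else 0) \<alpha> powr p)) UNIV
      = infsum (\<lambda>\<beta>. ennreal (cf (emb io \<beta>) * rpow (\<chi> i. if i = io then t else 0) (emb io \<beta>) powr p)) UNIV"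
    by (rule axis_infsum) (simp add: rpow_axis)
  also have "\<dots> = infsum (\<lambda>\<beta>. ennreal (cf (emb io \<beta>) * norm (zpow (cv (complex_of_real t)) \<beta>) powr p)) UNIV"
    using t by (intro infsum_cong) (simp add: rpow_axis emb_onaxis emb_i0 zpow_cv norm_power)
  finally show ?thesis .
qed

lemma summable_single:
  fixes f :: "'a \<Rightarrow> 'b::{comm_monoid_add, topological_space}"
  assumes "\<And>x. x \<noteq> c \<Longrightarrow> f x = 0" shows "f summable_on UNIV"
proof -
  have "f summable_on {c}" by simp
  then show ?thesis using summable_on_cong_neutral[where S="{c}" and T=UNIV and f=f and g=f] assms by auto
qed

lemma cmul_zero_right[simp]: "cmul J c 0 = 0"
  by (simp add: cmul_def)

lemma R_zero_mem:
  fixes J :: "'h::{real_inner,complete_space} \<Rightarrow> 'h" and U :: "('h \<Rightarrow>\<^sub>L 'h) \<Rightarrow> 'y::real_normed_vector"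
  assumes hJ: "cstruct_hilbert J" and hU: "cbounded_linear_on J JY U"
    and lam: "opnorm J U < lam" and p: "1 \<le> p" and PH: "PH J disc1 a b"
  shows "(SUP z \<in> (\<lambda>w. 0 *\<^sub>R w) ` disc1.
           infsum (\<lambda>\<alpha>. ennreal ((norm (U (a \<alpha>)) powr p + norm (U (b \<alpha>)) powr p)
                                  * norm (zpow z \<alpha>) powr p)) UNIV)
        \<le> ennreal (lam powr p * supnorm J disc1 a b powr p)"
proof -
  have d0: "(0 :: complex ^ 1) \<in> disc1" by (simp add: disc1_def)
  have img: "(\<lambda>w. 0 *\<^sub>R w) ` disc1 = {0 :: complex ^ 1}" using d0 by auto
  have "infsum (\<lambda>\<alpha>. ennreal ((norm (U (a \<alpha>)) powr p + norm (U (b \<alpha>)) powr p)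
                                  * norm (zpow (0 :: complex ^ 1) \<alpha>) powr p)) UNIV
      = ennreal ((norm (U (a 0)) powr p + norm (U (b 0)) powr p) * norm (zpow (0 :: complex ^ 1) 0) powr p)"
    by (rule infsum_at_zero_only) (use p in \<open>simp add: zpow_zero\<close>)
  also have "\<dots> = ennreal (norm (U (a 0)) powr p + norm (U (b 0)) powr p)" by (simp add: zpow_zero)
  also have "\<dots> \<le> ennreal (lam powr p * supnorm J disc1 a b powr p)"
    by (intro ennreal_leI zero_coeff_bound[OF hJ hU lam p PH d0])
  finally show ?thesis using img by simp
qed

lemma A_zero_mem:
  fixes J :: "'h::{real_inner,complete_space} \<Rightarrow> 'h" and U :: "('h \<Rightarrow>\<^sub>L 'h) \<Rightarrow> 'y::real_normed_vector"
  assumes hJ: "cstruct_hilbert J" and hU: "cbounded_linear_on J JY U"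
    and lam: "opnorm J U < lam" and p: "1 \<le> p" and PH: "PH J (lq_ball q :: (complex ^ 'n::finite) set) a b"
  shows "infsum (\<lambda>\<alpha>. ennreal ((norm (U (a \<alpha>)) powr p + norm (U (b \<alpha>)) powr p)
                                * rpow (0 :: real ^ 'n) \<alpha> powr p)) UNIV
        \<le> ennreal (lam powr p * supnorm J (lq_ball q :: (complex ^ 'n) set) a b powr p)"
proof -
  have "infsum (\<lambda>\<alpha>. ennreal ((norm (U (a \<alpha>)) powr p + norm (U (b \<alpha>)) powr p)
                                * rpow (0 :: real ^ 'n) \<alpha> powr p)) UNIV
      = ennreal ((norm (U (a 0)) powr p + norm (U (b 0)) powr p) * rpow (0 :: real ^ 'n) 0 powr p)"
    by (rule infsum_at_zero_only) (use p in \<open>simp add: rpow_zero\<close>)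
  also have "\<dots> = ennreal (norm (U (a 0)) powr p + norm (U (b 0)) powr p)" by (simp add: rpow_zero)
  also have "\<dots> \<le> ennreal (lam powr p * supnorm J (lq_ball q :: (complex ^ 'n) set) a b powr p)"
    by (intro ennreal_leI zero_coeff_bound[OF hJ hU lam p PH zero_in_lq_ball])
  finally show ?thesis .
qed

lemma R_bound:
  fixes J :: "'h::{real_inner,complete_space} \<Rightarrow> 'h" and U :: "('h \<Rightarrow>\<^sub>L 'h) \<Rightarrow> 'y::real_normed_vector"
  assumes hJ: "cstruct_hilbert J" and hU: "cbounded_linear_on J JY U"
    and T: "T \<in> BH J" "U T \<noteq> 0" and lam: "0 < lam" and p: "1 \<le> p" and \<rho>0: "0 \<le> \<rho>"
    and cond: "\<forall>a b. PH J disc1 a b \<longrightarrow>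
        (SUP z \<in> (\<lambda>w. \<rho> *\<^sub>R w) ` disc1.
           infsum (\<lambda>\<alpha>. ennreal ((norm (U (a \<alpha>)) powr p + norm (U (b \<alpha>)) powr p)
                                  * norm (zpow z \<alpha>) powr p)) UNIV)
        \<le> ennreal (lam powr p * supnorm J disc1 a b powr p)"
  shows "\<rho> \<le> 2 * lam * norm T / norm (U T)"
proof (rule ccontr)
  define M where "M = 2 * lam * norm T / norm (U T)"
  assume "\<not> \<rho> \<le> 2 * lam * norm T / norm (U T)"
  then have \<rho>M: "M < \<rho>" by (simp add: M_def)
  have nUT: "norm (U T) > 0" using T by simp
  have M0: "0 \<le> M" using lam nUT by (simp add: M_def)
  define s where "s = (\<rho> + M) / 2"
  have s: "M < s" "s < \<rho>" "0 < s" using \<rho>M M0 by (auto simp: s_def)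
  define a where "a \<beta> = (if \<beta> = e1 1 then T else 0)" for \<beta> :: "nat ^ 1"
  define b where "b \<beta> = (0 :: 'h \<Rightarrow>\<^sub>L 'h)" for \<beta> :: "nat ^ 1"
  have phf_ab: "phf J a b w = cmul J (w $ 1) T" for w
  proof -
    have "infsum (\<lambda>\<alpha>. cmul J (zpow w \<alpha>) (a \<alpha>)) UNIV = cmul J (zpow w (e1 1)) (a (e1 1))"
      by (rule infsum_at_zero_only) (simp add: a_def)
    moreover have "infsum (\<lambda>\<alpha>. cmul J (cnj (zpow w \<alpha>)) (hadj (b \<alpha>))) UNIV = 0"
      by (simp add: b_def hadj_zero)
    ultimately show ?thesis by (simp add: phf_def a_def zpow_1 e1_def)
  qed
  have nphf: "norm (phf J a b w) \<le> 2 * norm T" if "w \<in> disc1" for w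
  proof -
    have "norm (phf J a b w) \<le> 2 * cmod (w $ 1) * norm T" unfolding phf_ab by (rule cmul_norm_le[OF hJ])
    also have "\<dots> \<le> 2 * 1 * norm T" using that by (intro mult_right_mono mult_left_mono) (auto simp: disc1_def)
    finally show ?thesis by simp
  qed
  have PHab: "PH J disc1 a b"
    unfolding PH_def
  proof (intro conjI ballI allI)
    fix \<beta> show "a \<beta> \<in> BH J" "b \<beta> \<in> BH J" using T BH_zero[OF hJ] by (auto simp: a_def b_def)
  next
    show "b 0 = 0" by (simp add: b_def)
  next
    fix w :: "complex ^ 1"
    show "(\<lambda>\<alpha>. cmul J (zpow w \<alpha>) (a \<alpha>)) summable_on UNIV"
      by (rule summable_single[where c="e1 1"]) (simp add: a_def)
    show "(\<lambda>\<alpha>. cmul J (cnj (zpow w \<alpha>)) (hadj (b \<alpha>))) summable_on UNIV"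
      by (rule summable_single[where c="e1 1"]) (simp add: b_def hadj_zero)
  next
    show "bounded (phf J a b ` disc1)"
      unfolding bounded_iff using nphf by blast
  qed
  have sup_le: "supnorm J disc1 a b \<le> 2 * norm T"
    unfolding supnorm_def
  proof (rule cSUP_least)
    have "(0::complex^1) \<in> disc1" by (simp add: disc1_def)
    then show "disc1 \<noteq> {}" by blast
  qed (rule nphf)
  have sup0: "0 \<le> supnorm J disc1 a b" by (rule supnorm_nonneg[OF PHab, where z=0]) (simp add: disc1_def)
  define z where "z = cv (complex_of_real s)"
  have zin: "z \<in> (\<lambda>w. \<rho> *\<^sub>R w) ` disc1"
  proof
    have "s / \<rho> < 1" using s by simp
    then show "cv (complex_of_real (s / \<rho>)) \<in> disc1" using s by (simp add: cv_disc1 norm_divide)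
    have e: "\<rho> *\<^sub>R complex_of_real (s / \<rho>) = complex_of_real s"
    proof -
      have "\<rho> *\<^sub>R complex_of_real (s / \<rho>) = complex_of_real (\<rho> * (s / \<rho>))"
        by (simp only: scaleR_conv_of_real of_real_mult)
      also have "\<rho> * (s / \<rho>) = s" using s by simp
      finally show ?thesis .
    qed
    show "z = \<rho> *\<^sub>R cv (complex_of_real (s / \<rho>))"
    proof (rule vec_eq_iff[THEN iffD2], rule allI)
      fix i show "z $ i = (\<rho> *\<^sub>R cv (complex_of_real (s / \<rho>))) $ i"
        unfolding z_def cv_def vector_scaleR_component vec_lambda_beta by (rule e[symmetric])
    qed
  qed
  have "ennreal ((norm (U (a (e1 1))) powr p + norm (U (b (e1 1))) powr p) * norm (zpow z (e1 1)) powr p)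
      \<le> infsum (\<lambda>\<alpha>. ennreal ((norm (U (a \<alpha>)) powr p + norm (U (b \<alpha>)) powr p) * norm (zpow z \<alpha>) powr p)) UNIV"
    using ennreal_sum_le_infsum[where B="{e1 1}" and A=UNIV] by simp
  also have "\<dots> \<le> (SUP z \<in> (\<lambda>w. \<rho> *\<^sub>R w) ` disc1.
           infsum (\<lambda>\<alpha>. ennreal ((norm (U (a \<alpha>)) powr p + norm (U (b \<alpha>)) powr p)
                                  * norm (zpow z \<alpha>) powr p)) UNIV)"
    using zin by (rule SUP_upper)
  also have "\<dots> \<le> ennreal (lam powr p * supnorm J disc1 a b powr p)" using cond PHab by blast
  finally have "(norm (U T) powr p) * s powr p \<le> lam powr p * supnorm J disc1 a b powr p"
    using s p lam sup0 by (simp add: a_def b_def U_zero[OF hJ hU] zpow_cv_e1 z_def ennreal_le_iff)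
  also have "\<dots> \<le> lam powr p * (2 * norm T) powr p"
    using sup_le sup0 p by (intro mult_left_mono powr_mono2) auto
  finally have "(norm (U T) * s) powr p \<le> (lam * (2 * norm T)) powr p"
    using s lam by (simp add: powr_mult)
  have "norm (U T) * s \<le> lam * (2 * norm T)"
  proof (rule ccontr)
    assume "\<not> norm (U T) * s \<le> lam * (2 * norm T)"
    then have "lam * (2 * norm T) < norm (U T) * s" by simp
    moreover have "0 \<le> lam * (2 * norm T)" using lam by simp
    ultimately have "(lam * (2 * norm T)) powr p < (norm (U T) * s) powr p"
      using p by (intro powr_less_mono2) auto
    with \<open>(norm (U T) * s) powr p \<le> (lam * (2 * norm T)) powr p\<close> show False by simp
  qed
  then have "s \<le> M" using nUT by (simp add: M_def field_simps)
  then show False using s by simp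
qed

theorem mainTheorem14:
  fixes J :: "'h::{real_inner,complete_space} \<Rightarrow> 'h"
    and JY :: "'y::banach \<Rightarrow> 'y"
    and U :: "('h \<Rightarrow>\<^sub>L 'h) \<Rightarrow> 'y"
    and lam p :: real and q :: ereal
  assumes "cstruct_hilbert J"
    and "cstruct_banach JY"
    and "cbounded_linear_on J JY U"
    and "\<exists>T\<in>BH J. U T \<noteq> 0"
    and "opnorm J U < lam"
    and "1 \<le> p"
    and "1 \<le> q"
  shows "Rlam J U lam disc1 p / real CARD('n::finite)
           \<le> APlam J U lam (lq_ball q :: (complex ^ 'n) set) p
       \<and> APlam J U lam (lq_ball q :: (complex ^ 'n) set) p
           \<le> Rlam J U lam disc1 p / real CARD('n) powr (1 / p + qinv q - 1)"
proof -
  note hJ = assms(1) and hU = assms(3) and lam = assms(5) and p = assms(6) and q = assms(7)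
  obtain T where T: "T \<in> BH J" "U T \<noteq> 0" using assms(4) by blast
  have lam0: "0 < lam" using lam opnorm_props(1)[OF hJ hU] by linarith
  define condR where "condR r \<longleftrightarrow> (\<forall>a b. PH J disc1 a b \<longrightarrow>
        (SUP z \<in> (\<lambda>w. r *\<^sub>R w) ` disc1.
           infsum (\<lambda>\<alpha>. ennreal ((norm (U (a \<alpha>)) powr p + norm (U (b \<alpha>)) powr p)
                                  * norm (zpow z \<alpha>) powr p)) UNIV)
        \<le> ennreal (lam powr p * supnorm J disc1 a b powr p))" for r
  define condA where "condA (r :: real ^ 'n) \<longleftrightarrow> (\<forall>a b. PH J (lq_ball q :: (complex ^ 'n) set) a b \<longrightarrow>
        infsum (\<lambda>\<alpha>. ennreal ((norm (U (a \<alpha>)) powr p + norm (U (b \<alpha>)) powr p)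
                                * rpow r \<alpha> powr p)) UNIV
        \<le> ennreal (lam powr p * supnorm J (lq_ball q :: (complex ^ 'n) set) a b powr p))" for r
  define SR where "SR = {r. 0 \<le> r \<and> condR r}"
  define SA where "SA = {(\<Sum>i\<in>UNIV. r $ i) / real CARD('n) | r :: real ^ 'n. (\<forall>i. 0 \<le> r $ i) \<and> condA r}"
  have R_eq: "Rlam J U lam disc1 p = Sup SR" unfolding Rlam_def SR_def condR_def ..
  have A_eq: "APlam J U lam (lq_ball q :: (complex ^ 'n) set) p = Sup SA" unfolding APlam_def SA_def condA_def ..
  define N where "N = real CARD('n)"
  have N: "N > 0" by (simp add: N_def)
  define e where "e = 1 / p + qinv q - 1"
  have Ne: "N powr e > 0" using N by simp
  have SR0: "0 \<in> SR" unfolding SR_def condR_def using R_zero_mem[OF hJ hU lam p] by auto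
  have SR_bnd: "\<rho> \<le> 2 * lam * norm T / norm (U T)" if "\<rho> \<in> SR" for \<rho>
    using that unfolding SR_def condR_def by (intro R_bound[OF hJ hU T lam0 p]) auto
  have SR_bdd: "bdd_above SR" using SR_bnd by (intro bdd_aboveI) 
  have SA0: "0 \<in> SA"
  proof -
    have "condA 0" unfolding condA_def using A_zero_mem[OF hJ hU lam p] by auto
    then have "(\<Sum>i\<in>UNIV. (0::real^'n) $ i) / real CARD('n) \<in> SA" unfolding SA_def by (intro CollectI exI[of _ "0::real^'n"]) simp
    then show ?thesis by simp
  qed
  have F4: "x * N powr e \<le> Sup SR" if xin: "x \<in> SA" for x
  proof -
    obtain r :: "real ^ 'n" where x: "x = (\<Sum>i\<in>UNIV. r $ i) / N" and r0: "\<And>i. 0 \<le> r $ i" and cA: "condA r"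
      using xin unfolding SA_def N_def by blast
    define u where "u = real CARD('n) powr (qinv q - 1)"
    have u0: "0 < u" by (simp add: u_def)
    define \<rho> where "\<rho> = u * (\<Sum>i\<in>UNIV. r $ i powr p) powr (1/p)"
    have \<rho>0: "0 \<le> \<rho>" using u0 by (simp add: \<rho>_def)
    have "condR \<rho>" unfolding condR_def
    proof (intro allI impI)
      fix a b :: "nat ^ 1 \<Rightarrow> ('h \<Rightarrow>\<^sub>L 'h)" assume PHg: "PH J disc1 a b"
      define af where "af = (\<lambda>\<alpha>::nat^'n. (real (mult \<alpha>) * u ^ deg \<alpha>) *\<^sub>R a (e1 (deg \<alpha>)))"
      define bf where "bf = (\<lambda>\<alpha>::nat^'n. (real (mult \<alpha>) * u ^ deg \<alpha>) *\<^sub>R b (e1 (deg \<alpha>)))"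
      have c: "PH J (lq_ball q :: (complex^'n) set) af bf \<and>
         supnorm J (lq_ball q :: (complex^'n) set) af bf \<le> supnorm J disc1 a b"
        by (rule ub_construct[OF hJ PHg q u_def af_def bf_def])
      have BHa: "\<And>\<beta>. a \<beta> \<in> BH J" and BHb: "\<And>\<beta>. b \<beta> \<in> BH J" using PHg unfolding PH_def by auto
      have "(SUP z\<in>(\<lambda>w. \<rho> *\<^sub>R w) ` disc1. infsum (\<lambda>\<beta>. ennreal ((norm (U (a \<beta>)) powr p + norm (U (b \<beta>)) powr p)
              * norm (zpow z \<beta>) powr p)) UNIV)
         \<le> infsum (\<lambda>\<alpha>. ennreal ((norm (U (af \<alpha>)) powr p + norm (U (bf \<alpha>)) powr p) * rpow r \<alpha> powr p)) UNIV"
        by (rule ub_sum_ineq[OF hU BHa BHb p u0 r0 \<rho>_def af_def bf_def])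
      also have "\<dots> \<le> ennreal (lam powr p * supnorm J (lq_ball q :: (complex ^ 'n) set) af bf powr p)"
        using cA c unfolding condA_def by blast
      also have "\<dots> \<le> ennreal (lam powr p * supnorm J disc1 a b powr p)"
      proof (intro ennreal_leI mult_left_mono powr_mono2)
        show "0 \<le> supnorm J (lq_ball q :: (complex ^ 'n) set) af bf"
          using c zero_in_lq_ball by (blast intro: supnorm_nonneg)
      qed (use c p in auto)
      finally show "(SUP z\<in>(\<lambda>w. \<rho> *\<^sub>R w) ` disc1. infsum (\<lambda>\<beta>. ennreal ((norm (U (a \<beta>)) powr p + norm (U (b \<beta>)) powr p)
              * norm (zpow z \<beta>) powr p)) UNIV) \<le> ennreal (lam powr p * supnorm J disc1 a b powr p)" .
    qed
    then have "\<rho> \<in> SR" using \<rho>0 by (simp add: SR_def)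
    then have "\<rho> \<le> Sup SR" using SR_bdd by (rule cSup_upper)
    moreover have "x * N powr e \<le> \<rho>"
      unfolding x \<rho>_def u_def N_def e_def by (rule avg_le[OF p r0])
    ultimately show ?thesis by linarith
  qed
  have SA_bdd: "bdd_above SA"
  proof (rule bdd_aboveI)
    fix x assume "x \<in> SA"
    then have "x * N powr e \<le> Sup SR" by (rule F4)
    then show "x \<le> Sup SR / N powr e" using Ne by (simp add: pos_le_divide_eq)
  qed
  have SA_nn: "0 \<le> Sup SA" using SA0 SA_bdd by (rule cSup_upper)
  have F5: "t / N \<in> SA" if \<rho>: "\<rho> \<in> SR" and t: "0 \<le> t" "t < \<rho>" for \<rho> t
  proof -
    define io :: 'n where "io = undefined"
    define r :: "real ^ 'n" where "r = (\<chi> i. if i = io then t else 0)"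
    have r0: "\<forall>i. 0 \<le> r $ i" using t by (simp add: r_def)
    have sr: "(\<Sum>i\<in>UNIV. r $ i) = t" by (simp add: r_def if_distrib cong: if_cong)
    have \<rho>pos: "0 < \<rho>" using t by linarith
    have cR: "condR \<rho>" using \<rho> by (simp add: SR_def)
    have "condA r" unfolding condA_def
    proof (intro allI impI)
      fix a b :: "nat ^ 'n \<Rightarrow> ('h \<Rightarrow>\<^sub>L 'h)" assume PHf: "PH J (lq_ball q :: (complex ^ 'n) set) a b"
      have c: "PH J disc1 (\<lambda>\<beta>. a (emb io \<beta>)) (\<lambda>\<beta>. b (emb io \<beta>)) \<and>
         supnorm J disc1 (\<lambda>\<beta>. a (emb io \<beta>)) (\<lambda>\<beta>. b (emb io \<beta>)) \<le> supnorm J (lq_ball q :: (complex^'n) set) a b"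
        by (rule lb_construct[OF PHf q])
      define z where "z = cv (complex_of_real t)"
      have zin: "z \<in> (\<lambda>w. \<rho> *\<^sub>R w) ` disc1"
      proof
        have "t / \<rho> < 1" using t \<rho>pos by simp
        then show "cv (complex_of_real (t / \<rho>)) \<in> disc1" using t \<rho>pos by (simp add: cv_disc1 norm_divide)
        have e: "\<rho> *\<^sub>R complex_of_real (t / \<rho>) = complex_of_real t"
        proof -
          have "\<rho> *\<^sub>R complex_of_real (t / \<rho>) = complex_of_real (\<rho> * (t / \<rho>))"
            by (simp only: scaleR_conv_of_real of_real_mult)
          also have "\<rho> * (t / \<rho>) = t" using \<rho>pos by simp
          finally show ?thesis .
        qed
        show "z = \<rho> *\<^sub>R cv (complex_of_real (t / \<rho>))"
        proof (rule vec_eq_iff[THEN iffD2], rule allI)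
          fix i show "z $ i = (\<rho> *\<^sub>R cv (complex_of_real (t / \<rho>))) $ i"
            unfolding z_def cv_def vector_scaleR_component vec_lambda_beta by (rule e[symmetric])
        qed
      qed
      have "infsum (\<lambda>\<alpha>. ennreal ((norm (U (a \<alpha>)) powr p + norm (U (b \<alpha>)) powr p) * rpow r \<alpha> powr p)) UNIV
          = infsum (\<lambda>\<beta>. ennreal ((norm (U (a (emb io \<beta>))) powr p + norm (U (b (emb io \<beta>))) powr p)
                   * norm (zpow z \<beta>) powr p)) UNIV"
        unfolding r_def z_def by (rule lb_sum_eq[OF t(1) p])
      also have "\<dots> \<le> (SUP z \<in> (\<lambda>w. \<rho> *\<^sub>R w) ` disc1.
           infsum (\<lambda>\<beta>. ennreal ((norm (U (a (emb io \<beta>))) powr p + norm (U (b (emb io \<beta>))) powr p)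
                   * norm (zpow z \<beta>) powr p)) UNIV)"
        using zin by (rule SUP_upper)
      also have "\<dots> \<le> ennreal (lam powr p * supnorm J disc1 (\<lambda>\<beta>. a (emb io \<beta>)) (\<lambda>\<beta>. b (emb io \<beta>)) powr p)"
        using cR c unfolding condR_def by blast
      also have "\<dots> \<le> ennreal (lam powr p * supnorm J (lq_ball q :: (complex ^ 'n) set) a b powr p)"
      proof (intro ennreal_leI mult_left_mono powr_mono2)
        have "(0::complex^1) \<in> disc1" by (simp add: disc1_def)
        then show "0 \<le> supnorm J disc1 (\<lambda>\<beta>. a (emb io \<beta>)) (\<lambda>\<beta>. b (emb io \<beta>))"
          using c by (blast intro: supnorm_nonneg)
      qed (use c p in auto)
      finally show "infsum (\<lambda>\<alpha>. ennreal ((norm (U (a \<alpha>)) powr p + norm (U (b \<alpha>)) powr p) * rpow r \<alpha> powr p)) UNIV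
          \<le> ennreal (lam powr p * supnorm J (lq_ball q :: (complex ^ 'n) set) a b powr p)" .
    qed
    then have "(\<Sum>i\<in>UNIV. r $ i) / real CARD('n) \<in> SA" unfolding SA_def using r0 by blast
    then show ?thesis using sr by (simp add: N_def)
  qed
  have lower: "Sup SR \<le> N * Sup SA"
  proof (rule cSup_least)
    show "SR \<noteq> {}" using SR0 by blast
    fix \<rho> assume \<rho>: "\<rho> \<in> SR"
    show "\<rho> \<le> N * Sup SA"
    proof (rule ccontr)
      assume "\<not> \<rho> \<le> N * Sup SA"
      then have lt: "N * Sup SA < \<rho>" by simp
      define t where "t = (\<rho> + N * Sup SA) / 2"
      have NS: "0 \<le> N * Sup SA" using N SA_nn by simp
      have t: "0 \<le> t" "t < \<rho>" "N * Sup SA < t" using lt NS by (auto simp: t_def)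
      have "t / N \<in> SA" by (rule F5[OF \<rho> t(1,2)])
      then have "t / N \<le> Sup SA" using SA_bdd by (rule cSup_upper)
      then have "t \<le> N * Sup SA" using N by (simp add: pos_divide_le_eq mult.commute)
      then show False using t by simp
    qed
  qed
  have upper: "Sup SA \<le> Sup SR / N powr e"
  proof (rule cSup_least)
    show "SA \<noteq> {}" using SA0 by blast
    fix x assume "x \<in> SA"
    then have "x * N powr e \<le> Sup SR" by (rule F4)
    then show "x \<le> Sup SR / N powr e" using Ne by (simp add: pos_le_divide_eq)
  qed
  have "Sup SR / N \<le> Sup SA" using lower N by (simp add: pos_divide_le_eq mult.commute)
  then show ?thesis using upper unfolding R_eq A_eq N_def e_def by simp
qed

end
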